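(* Let $\Sigma^2$ be a Riemann surface and $\vec\Phi:\Sigma^2\to S^4$ a smooth conformal immersion. Then Montiel's forms $\mathscr Q_{\vec\Phi}=2\langle\partial^2\Psi,\partial^2\bar\Psi\rangle_h$ and $\mathscr O_{\vec\Phi}=\langle\partial^2\Psi,\partial^2\Psi\rangle_h\otimes\langle\partial^2\bar\Psi,\partial^2\bar\Psi\rangle_h$ are given by $$\mathscr Q_{\vec\Phi}=g^{-1}\otimes\big(\partial\bar\partial\vec h_0\dot\otimes\vec h_0-\partial\vec h_0\dot\otimes\bar\partial\vec h_0\big)+\tfrac14(1+|\vec H|^2)\vec h_0\dot\otimes\vec h_0,$$ $$\begin{aligned}\mathscr O_{\vec\Phi}=\ &g^{-2}\otimes\Big\{\tfrac14(\partial\bar\partial\vec h_0\dot\otimes\partial\bar\partial\vec h_0)\otimes(\vec h_0\dot\otimes\vec h_0)+\tfrac14(\partial\vec h_0\dot\otimes\partial\vec h_0)\otimes(\bar\partial\vec h_0\dot\otimes\bar\partial\vec h_0)\\&-\tfrac12(\partial\bar\partial\vec h_0\dot\otimes\partial\vec h_0)\otimes(\bar\partial\vec h_0\dot\otimes\vec h_0)-\tfrac12(\partial\bar\partial\vec h_0\dot\otimes\bar\partial\vec h_0)\otimes(\partial\vec h_0\dot\otimes\vec h_0)+\tfrac12(\partial\bar\partial\vec h_0\dot\otimes\vec h_0)\otimes(\partial\vec h_0\dot\otimes\bar\partial\vec h_0)\Big\}\\&+\tfrac14(1+|\vec H|^2)g^{-1}\otimes\Big\{\tfrac12(\partial\bar\partial\vec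 h_0\dot\otimes\vec h_0)\otimes(\vec h_0\dot\otimes\vec h_0)-(\partial\vec h_0\dot\otimes\vec h_0)\otimes(\bar\partial\vec h_0\dot\otimes\vec h_0)+\tfrac12(\partial\vec h_0\dot\otimes\bar\partial\vec h_0)\otimes(\vec h_0\dot\otimes\vec h_0)\Big\}\\&+\tfrac1{64}(1+|\vec H|^2)^2(\vec h_0\dot\otimes\vec h_0)\otimes(\vec h_0\dot\otimes\vec h_0),\end{aligned}$$ where here $\partial,\bar\partial$ denote the normal operators $\partial^N,\bar\partial^N$.
   Context: $S^4\subset\mathbb R^5$ is the unit sphere. In a local complex coordinate $z$, $g=e^{2\lambda}|dz|^2$ is the induced metric; $\langle\cdot,\cdot\rangle$ is the complex-bilinear Euclidean product; $\nabla^N$ is the normal connection of $\vec\Phi$ in $S^4$ extended to the complexified normal bundle $T^N_{\mathbb C}\Sigma^2$; $\partial=\partial^N=\nabla^N_{\partial_z}(\cdot)\otimes dz$, $\bar\partial=\bar\partial^N=\nabla^N_{\partial_{\bar z}}(\cdot)\otimes d\bar z$. $\vec{\mathbb I}$ is the second fundamental form of $\vec\Phi$ in $S^4$, $\vec H=\frac12\mathrm{tr}_g\vec{\mathbb I}$, $\vec h_0=2\vec{\mathbb I}(\partial_z\vec\Phi,\partial_z\vec\Phi)dz^2$. $g^{-1}\otimes(f\,dz^p\otimes d\bar z^q)=e^{-2\lambda}f\,dz^{p-1}\otimes d\bar z^{q-1}$, $g^{-2}=g^{-1}\otimes g^{-1}$; $\vec f_1dz^{p_1}d\bar z^{q_1}\dot\otimes\vec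 f_2dz^{p_2}d\bar z^{q_2}=\langle\vec f_1,\vec f_2\rangle dz^{p_1+p_2}d\bar z^{q_1+q_2}$. Pseudo Gauss map: on $\mathbb R^6$ let $h=-dx_0^2+dx_1^2+\dots+dx_5^2$, extended complex-bilinearly as $\langle\cdot,\cdot\rangle_h$; $\vec a=(1,0,\dots,0)$, and $\vec\Phi$, normal vectors are viewed in $\{0\}\times\mathbb R^5$. Define the section $\psi$ of $(T^N_{\mathbb C}\Sigma^2)^*\otimes\mathbb C^6$ by $\psi(\vec\xi)=\langle\vec H,\vec\xi\rangle(\vec a+\vec\Phi)+\vec\xi$, with derivative $(\nabla_{\partial_z}\psi)(\vec\xi)=\partial_z(\psi(\vec\xi))-\psi(\nabla^N_{\partial_z}\vec\xi)$ and $\partial^2\psi=(\nabla_{\partial_z}\nabla_{\partial_z}\psi)dz^2$. Let $J$ be the rotation by $+\pi/2$ in the oriented normal plane; $T^N_{\mathbb C}\Sigma^2=\mathscr N\oplus\bar{\mathscr N}$ with $\mathscr N$ the $i$-eigenspace of $J$. With $(\vec n_1,\vec n_2)$ an oriented orthonormal normal frame, $J\vec n_1=-\vec n_2$, $\vec e_1=(\vec n_1+i\vec n_2)/\sqrt2$ spans $\mathscr N$ and $\vec e_2=\bar{\vec e}_1$ spans $\bar{\mathscr N}$. $\Psi$ is the restriction of $\psi$ to $\mathscr N$; concretely $\mathscr Q_{\vec\Phi}=2\langle\partial^2\psi,\partial^2\psi\rangle_h(\vec e_1,\vec e_2)$ and $\mathscr O_{\vec\Phi}=\langle\partial^2\psi,\partial^2\psi\rangle_h(\vec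 e_1,\vec e_1)\otimes\langle\partial^2\psi,\partial^2\psi\rangle_h(\vec e_2,\vec e_2)$. *)

theory Defs
  imports "HOL-Analysis.Analysis"
begin

text \<open>Local setting: a complex coordinate z on an open set U of the complex plane
(a chart of the Riemann surface). All tensors are represented by their coefficients
w.r.t. dz^p dzbar^q; the operators on tensors act coefficientwise, as in the paper.\<close>

definition dirD :: "complex \<Rightarrow> (complex \<Rightarrow> 'b::real_normed_vector) \<Rightarrow> complex \<Rightarrow> 'b" where
  "dirD v f p = frechet_derivative f (at p) v"

fun iterD :: "complex list \<Rightarrow> (complex \<Rightarrow> 'b::real_normed_vector) \<Rightarrow> complex \<Rightarrow> 'b" where
  "iterD [] f = f"
| "iterD (v # vs) f = dirD v (iterD vs f)"

definition smooth_on :: "complex set \<Rightarrow> (complex \<Rightarrow> 'b::real_normed_vector) \<Rightarrow> bool" where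
  "smooth_on U f \<longleftrightarrow> (\<forall>vs. iterD vs f differentiable_on U)"

definition cvec :: "real^5 \<Rightarrow> complex^5" where
  "cvec x = (\<chi> i. complex_of_real (x $ i))"

definition cbil :: "complex^5 \<Rightarrow> complex^5 \<Rightarrow> complex" where
  "cbil a b = (\<Sum>i\<in>UNIV. a $ i * b $ i)"

text \<open>C^6 = C x C^5 (coordinate x0 first); complex-bilinear extension of
 h = -dx0^2 + dx1^2 + ... + dx5^2.\<close>
type_synonym c6 = "complex \<times> (complex^5)"

definition hbil :: "c6 \<Rightarrow> c6 \<Rightarrow> complex" where
  "hbil a b = - fst a * fst b + cbil (snd a) (snd b)"

definition dzv :: "(complex \<Rightarrow> complex^5) \<Rightarrow> complex \<Rightarrow> complex^5" where
  "dzv f p = (1/2 :: complex) *s (dirD 1 f p - \<i> *s dirD \<i> f p)"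

definition dzbv :: "(complex \<Rightarrow> complex^5) \<Rightarrow> complex \<Rightarrow> complex^5" where
  "dzbv f p = (1/2 :: complex) *s (dirD 1 f p + \<i> *s dirD \<i> f p)"

definition dzs :: "(complex \<Rightarrow> complex) \<Rightarrow> complex \<Rightarrow> complex" where
  "dzs f p = (dirD 1 f p - \<i> * dirD \<i> f p) / 2"

definition dzP :: "(complex \<Rightarrow> c6) \<Rightarrow> complex \<Rightarrow> c6" where
  "dzP F p = (dzs (\<lambda>q. fst (F q)) p, dzv (\<lambda>q. snd (F q)) p)"

definition conformal_immersion_S4 :: "complex set \<Rightarrow> (complex \<Rightarrow> real^5) \<Rightarrow> bool" where
  "conformal_immersion_S4 U \<Phi> \<longleftrightarrow> open U \<and> smooth_on U \<Phi> \<and>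
     (\<forall>p\<in>U. norm (\<Phi> p) = 1 \<and>
        dirD 1 \<Phi> p \<bullet> dirD \<i> \<Phi> p = 0 \<and>
        norm (dirD 1 \<Phi> p) = norm (dirD \<i> \<Phi> p) \<and>
        dirD 1 \<Phi> p \<noteq> 0)"

text \<open>Oriented orthonormal frame (n1,n2) of the normal bundle of Phi in S^4
 (orientation of S^4 induced as boundary of the unit ball, of the surface by z).\<close>
definition oriented_normal_frame ::
  "complex set \<Rightarrow> (complex \<Rightarrow> real^5) \<Rightarrow> (complex \<Rightarrow> real^5) \<Rightarrow> (complex \<Rightarrow> real^5) \<Rightarrow> bool" where
  "oriented_normal_frame U \<Phi> n1 n2 \<longleftrightarrow> smooth_on U n1 \<and> smooth_on U n2 \<and>
     (\<forall>p\<in>U. norm (n1 p) = 1 \<and> norm (n2 p) = 1 \<and> n1 p \<bullet> n2 p = 0 \<and>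
        n1 p \<bullet> \<Phi> p = 0 \<and> n2 p \<bullet> \<Phi> p = 0 \<and>
        n1 p \<bullet> dirD 1 \<Phi> p = 0 \<and> n2 p \<bullet> dirD 1 \<Phi> p = 0 \<and>
        n1 p \<bullet> dirD \<i> \<Phi> p = 0 \<and> n2 p \<bullet> dirD \<i> \<Phi> p = 0 \<and>
        det (vector [\<Phi> p, dirD 1 \<Phi> p, dirD \<i> \<Phi> p, n1 p, n2 p] :: real^5^5) > 0)"

definition Phic :: "(complex \<Rightarrow> real^5) \<Rightarrow> complex \<Rightarrow> complex^5" where
  "Phic \<Phi> p = cvec (\<Phi> p)"

text \<open>e^{2 lambda}, where g = e^{2 lambda} |dz|^2.\<close>
definition e2lam :: "(complex \<Rightarrow> real^5) \<Rightarrow> complex \<Rightarrow> complex" where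
  "e2lam \<Phi> p = complex_of_real ((norm (dirD 1 \<Phi> p))\<^sup>2)"

definition nproj :: "(complex \<Rightarrow> real^5) \<Rightarrow> complex \<Rightarrow> complex^5 \<Rightarrow> complex^5" where
  "nproj \<Phi> p v = v - cbil v (Phic \<Phi> p) *s Phic \<Phi> p
     - (1 / e2lam \<Phi> p) *s (cbil v (cvec (dirD 1 \<Phi> p)) *s cvec (dirD 1 \<Phi> p)
                          + cbil v (cvec (dirD \<i> \<Phi> p)) *s cvec (dirD \<i> \<Phi> p))"

definition nablaN :: "(complex \<Rightarrow> real^5) \<Rightarrow> (complex \<Rightarrow> complex^5) \<Rightarrow> complex \<Rightarrow> complex^5" where
  "nablaN \<Phi> \<xi> p = nproj \<Phi> p (dzv \<xi> p)"

definition nablaNb :: "(complex \<Rightarrow> real^5) \<Rightarrow> (complex \<Rightarrow> complex^5) \<Rightarrow> complex \<Rightarrow> complex^5" where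
  "nablaNb \<Phi> \<xi> p = nproj \<Phi> p (dzbv \<xi> p)"

text \<open>Coefficient of h0 = 2 II(dPhi/dz, dPhi/dz) dz^2.\<close>
definition h0 :: "(complex \<Rightarrow> real^5) \<Rightarrow> complex \<Rightarrow> complex^5" where
  "h0 \<Phi> p = 2 *s nproj \<Phi> p (dzv (dzv (Phic \<Phi>)) p)"

text \<open>Mean curvature H = (1/2) tr_g II = 2 e^{-2 lambda} II(d/dz, d/dzbar).\<close>
definition Hvec :: "(complex \<Rightarrow> real^5) \<Rightarrow> complex \<Rightarrow> complex^5" where
  "Hvec \<Phi> p = (2 / e2lam \<Phi> p) *s nproj \<Phi> p (dzv (dzbv (Phic \<Phi>)) p)"

text \<open>psi(xi) = <H,xi>(a + Phi) + xi, applied to a normal field xi.\<close>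
definition psiF :: "(complex \<Rightarrow> real^5) \<Rightarrow> (complex \<Rightarrow> complex^5) \<Rightarrow> complex \<Rightarrow> c6" where
  "psiF \<Phi> \<xi> p = (cbil (Hvec \<Phi> p) (\<xi> p),
                   cbil (Hvec \<Phi> p) (\<xi> p) *s Phic \<Phi> p + \<xi> p)"

definition nablaT :: "(complex \<Rightarrow> real^5) \<Rightarrow> ((complex \<Rightarrow> complex^5) \<Rightarrow> complex \<Rightarrow> c6)
     \<Rightarrow> (complex \<Rightarrow> complex^5) \<Rightarrow> complex \<Rightarrow> c6" where
  "nablaT \<Phi> T \<xi> p = dzP (T \<xi>) p - T (nablaN \<Phi> \<xi>) p"

text \<open>Coefficient of d^2 psi = (nabla nabla psi) dz^2.\<close>
definition d2psi :: "(complex \<Rightarrow> real^5) \<Rightarrow> (complex \<Rightarrow> complex^5) \<Rightarrow> complex \<Rightarrow> c6" where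
  "d2psi \<Phi> = nablaT \<Phi> (nablaT \<Phi> (psiF \<Phi>))"

definition e1 :: "(complex \<Rightarrow> real^5) \<Rightarrow> (complex \<Rightarrow> real^5) \<Rightarrow> complex \<Rightarrow> complex^5" where
  "e1 n1 n2 p = (1 / complex_of_real (sqrt 2)) *s (cvec (n1 p) + \<i> *s cvec (n2 p))"

definition e2 :: "(complex \<Rightarrow> real^5) \<Rightarrow> (complex \<Rightarrow> real^5) \<Rightarrow> complex \<Rightarrow> complex^5" where
  "e2 n1 n2 p = (1 / complex_of_real (sqrt 2)) *s (cvec (n1 p) - \<i> *s cvec (n2 p))"

text \<open>Coefficients (of dz^4 resp. dz^8) of Montiel's forms.\<close>
definition MontielQ :: "(complex \<Rightarrow> real^5) \<Rightarrow> (complex \<Rightarrow> real^5) \<Rightarrow> (complex \<Rightarrow> real^5) \<Rightarrow> complex \<Rightarrow> complex" where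
  "MontielQ \<Phi> n1 n2 p = 2 * hbil (d2psi \<Phi> (e1 n1 n2) p) (d2psi \<Phi> (e2 n1 n2) p)"

definition MontielO :: "(complex \<Rightarrow> real^5) \<Rightarrow> (complex \<Rightarrow> real^5) \<Rightarrow> (complex \<Rightarrow> real^5) \<Rightarrow> complex \<Rightarrow> complex" where
  "MontielO \<Phi> n1 n2 p = hbil (d2psi \<Phi> (e1 n1 n2) p) (d2psi \<Phi> (e1 n1 n2) p)
                       * hbil (d2psi \<Phi> (e2 n1 n2) p) (d2psi \<Phi> (e2 n1 n2) p)"

end

theory Submission
  imports Defs
begin

lemma dirD_eq: "(f has_derivative f') (at q) \<Longrightarrow> dirD v f q = f' v"
  unfolding dirD_def using frechet_derivative_at by metis

lemma dirD_local:
  assumes "open U" "q \<in> U" "\<And>x. x \<in> U \<Longrightarrow> f x = g x"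
  shows "dirD v f q = dirD v g q"
proof -
  have "\<And>D. (f has_derivative D) (at q) \<longleftrightarrow> (g has_derivative D) (at q)"
    using has_derivative_transform_within_open[OF _ assms(1,2), where t=UNIV] assms(3) by metis
  then show ?thesis unfolding dirD_def frechet_derivative_def by simp
qed

lemma diff_on_at: "open U \<Longrightarrow> f differentiable_on U \<Longrightarrow> q \<in> U \<Longrightarrow> f differentiable (at q)"
  using differentiable_on_eq_differentiable_at by blast

lemma diff_on_cong:
  assumes "open U" "\<And>x. x \<in> U \<Longrightarrow> f x = g x" "f differentiable_on U"
  shows "g differentiable_on U"
  unfolding differentiable_on_eq_differentiable_at[OF assms(1)]
proof
  fix q assume q: "q \<in> U"
  then obtain D where "(f has_derivative D) (at q)"
    using assms diff_on_at differentiable_def by metis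
  then have "(g has_derivative D) (at q)"
    using has_derivative_transform_within_open[OF _ assms(1) q, where t=UNIV] assms(2) by metis
  then show "g differentiable at q" unfolding differentiable_def by blast
qed

fun Ck :: "nat \<Rightarrow> complex set \<Rightarrow> (complex \<Rightarrow> 'b::real_normed_vector) \<Rightarrow> bool" where
  "Ck 0 U f = True"
| "Ck (Suc k) U f = (f differentiable_on U \<and> (\<forall>v. Ck k U (dirD v f)))"

definition sm :: "complex set \<Rightarrow> (complex \<Rightarrow> 'b::real_normed_vector) \<Rightarrow> bool" where
  "sm U f \<longleftrightarrow> (\<forall>k. Ck k U f)"

lemma iterD_append: "iterD (vs @ [v]) f = iterD vs (dirD v f)"
  by (induction vs) auto

lemma smooth_Ck: "smooth_on U f \<Longrightarrow> Ck k U f"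
proof (induction k arbitrary: f)
  case 0 then show ?case by simp
next
  case (Suc k)
  have "f differentiable_on U" using Suc.prems unfolding smooth_on_def
    by (metis iterD.simps(1))
  moreover have "smooth_on U (dirD v f)" for v
    using Suc.prems unfolding smooth_on_def by (metis iterD_append)
  ultimately show ?case using Suc.IH by simp
qed

lemma smooth_sm: "smooth_on U f \<Longrightarrow> sm U f"
  using smooth_Ck sm_def by blast

lemma Ck_mono: "Ck (Suc k) U f \<Longrightarrow> Ck k U f"
  by (induction k arbitrary: f) auto

lemma sm_diff: "sm U f \<Longrightarrow> f differentiable_on U"
  unfolding sm_def by (metis Ck.simps(2))

lemma sm_at: "open U \<Longrightarrow> sm U f \<Longrightarrow> q \<in> U \<Longrightarrow> f differentiable (at q)"
  using sm_diff diff_on_at by blast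

lemma sm_dirD: "sm U f \<Longrightarrow> sm U (dirD v f)"
  unfolding sm_def by (metis Ck.simps(2))

lemma Ck_cong:
  assumes "open U" "\<And>x. x \<in> U \<Longrightarrow> f x = g x" "Ck k U f"
  shows "Ck k U g"
  using assms(2,3)
proof (induction k arbitrary: f g)
  case 0 then show ?case by simp
next
  case (Suc k)
  have e: "\<And>v x. x \<in> U \<Longrightarrow> dirD v f x = dirD v g x"
    using dirD_local[OF assms(1)] Suc.prems(1) by blast
  have "g differentiable_on U" using Suc.prems diff_on_cong[OF assms(1), of f g] by simp
  moreover have "Ck k U (dirD v g)" for v using Suc.IH[of "dirD v f" "dirD v g"] e Suc.prems by simp
  ultimately show ?case by simp
qed

lemma sm_cong: "open U \<Longrightarrow> (\<And>x. x \<in> U \<Longrightarrow> f x = g x) \<Longrightarrow> sm U f \<Longrightarrow> sm U g"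
  unfolding sm_def using Ck_cong by blast

lemma dirD_add:
  assumes "f differentiable (at q)" "g differentiable (at q)"
  shows "dirD v (\<lambda>x. f x + g x) q = dirD v f q + dirD v g q"
proof -
  obtain F G where F: "(f has_derivative F) (at q)" and G: "(g has_derivative G) (at q)"
    using assms unfolding differentiable_def by blast
  have "((\<lambda>x. f x + g x) has_derivative (\<lambda>h. F h + G h)) (at q)"
    using has_derivative_add[OF F G] .
  then show ?thesis using dirD_eq[OF F] dirD_eq[OF G] dirD_eq by simp
qed

lemma dirD_lin:
  assumes "bounded_linear L" "f differentiable (at q)"
  shows "dirD v (\<lambda>x. L (f x)) q = L (dirD v f q)"
proof -
  obtain F where F: "(f has_derivative F) (at q)"
    using assms unfolding differentiable_def by blast
  have "((\<lambda>x. L (f x)) has_derivative (\<lambda>h. L (F h))) (at q)"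
    using bounded_linear.has_derivative[OF assms(1) F] .
  then show ?thesis using dirD_eq[OF F] dirD_eq by simp
qed

lemma dirD_bil:
  assumes "bounded_bilinear bp" "f differentiable (at q)" "g differentiable (at q)"
  shows "dirD v (\<lambda>x. bp (f x) (g x)) q = bp (f q) (dirD v g q) + bp (dirD v f q) (g q)"
proof -
  obtain F G where F: "(f has_derivative F) (at q)" and G: "(g has_derivative G) (at q)"
    using assms unfolding differentiable_def by blast
  have "((\<lambda>x. bp (f x) (g x)) has_derivative (\<lambda>h. bp (f q) (G h) + bp (F h) (g q))) (at q)"
    using bounded_bilinear.FDERIV[OF assms(1) F G] .
  then show ?thesis using dirD_eq[OF F] dirD_eq[OF G] dirD_eq by simp
qed

lemma dirD_const: "dirD v (\<lambda>x. c) q = (0::'b::real_normed_vector)"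
proof -
  have "((\<lambda>x. c) has_derivative (\<lambda>h. 0)) (at q)" by simp
  then show ?thesis using dirD_eq by fastforce
qed

lemma dirD_inverse:
  fixes f :: "complex \<Rightarrow> complex"
  assumes "f differentiable (at q)" "f q \<noteq> 0"
  shows "dirD v (\<lambda>x. inverse (f x)) q = - (inverse (f q) * dirD v f q * inverse (f q))"
proof -
  obtain F where F: "(f has_derivative F) (at q)"
    using assms unfolding differentiable_def by blast
  have "((\<lambda>x. inverse (f x)) has_derivative (\<lambda>h. - (inverse (f q) * F h * inverse (f q)))) (at q)"
    using Deriv.has_derivative_inverse[OF assms(2) F] .
  then show ?thesis using dirD_eq[OF F] dirD_eq by simp
qed

lemma Ck_SucD: "Ck (Suc k) U f \<Longrightarrow> f differentiable_on U"
  "Ck (Suc k) U f \<Longrightarrow> Ck k U (dirD v f)"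
  by auto

lemma Ck_add:
  assumes "open U" shows "Ck k U f \<Longrightarrow> Ck k U g \<Longrightarrow> Ck k U (\<lambda>x. f x + g x)"
proof (induction k arbitrary: f g)
  case 0 then show ?case by simp
next
  case (Suc k)
  have df: "f differentiable_on U" and dg: "g differentiable_on U"
    using Suc.prems by auto
  have d: "(\<lambda>x. f x + g x) differentiable_on U"
    using df dg by (rule differentiable_on_add)
  have "Ck k U (dirD v (\<lambda>x. f x + g x))" for v
  proof (rule Ck_cong[OF assms])
    show "Ck k U (\<lambda>x. dirD v f x + dirD v g x)" using Suc by auto
    fix x assume x: "x \<in> U"
    show "dirD v f x + dirD v g x = dirD v (\<lambda>x. f x + g x) x"
      using dirD_add[OF diff_on_at[OF assms df x] diff_on_at[OF assms dg x]] by simp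
  qed
  then show ?case using d by simp
qed

lemma Ck_lin:
  assumes "open U" "bounded_linear L" shows "Ck k U f \<Longrightarrow> Ck k U (\<lambda>x. L (f x))"
proof (induction k arbitrary: f)
  case 0 then show ?case by simp
next
  case (Suc k)
  have df: "f differentiable_on U" using Suc.prems by auto
  have d: "(\<lambda>x. L (f x)) differentiable_on U"
    unfolding differentiable_on_eq_differentiable_at[OF assms(1)]
  proof
    fix x assume x: "x \<in> U"
    obtain F where "(f has_derivative F) (at x)"
      using diff_on_at[OF assms(1) df x] unfolding differentiable_def by blast
    then show "(\<lambda>x. L (f x)) differentiable at x"
      using bounded_linear.has_derivative[OF assms(2)] unfolding differentiable_def by blast
  qed
  have "Ck k U (dirD v (\<lambda>x. L (f x)))" for v
  proof (rule Ck_cong[OF assms(1)])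
    show "Ck k U (\<lambda>x. L (dirD v f x))" using Suc by auto
    fix x assume x: "x \<in> U"
    show "L (dirD v f x) = dirD v (\<lambda>x. L (f x)) x"
      using dirD_lin[OF assms(2) diff_on_at[OF assms(1) df x]] by simp
  qed
  then show ?case using d by simp
qed

lemma Ck_const: "Ck k U (\<lambda>x. c)"
proof (induction k arbitrary: c)
  case 0 then show ?case by simp
next
  case (Suc k)
  have e: "dirD v (\<lambda>x. c) = (\<lambda>x. 0)" for v using dirD_const by blast
  have "(\<lambda>x. c) differentiable_on U" by simp
  then show ?case using Suc e by simp
qed

lemma Ck_bil:
  assumes "open U" "bounded_bilinear bp"
  shows "Ck k U f \<Longrightarrow> Ck k U g \<Longrightarrow> Ck k U (\<lambda>x. bp (f x) (g x))"
proof (induction k arbitrary: f g)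
  case 0 then show ?case by simp
next
  case (Suc k)
  have df: "f differentiable_on U" and dg: "g differentiable_on U"
    using Suc.prems by auto
  have d: "(\<lambda>x. bp (f x) (g x)) differentiable_on U"
    unfolding differentiable_on_eq_differentiable_at[OF assms(1)]
  proof
    fix x assume x: "x \<in> U"
    obtain F where F: "(f has_derivative F) (at x)"
      using diff_on_at[OF assms(1) df x] unfolding differentiable_def by blast
    obtain G where G: "(g has_derivative G) (at x)"
      using diff_on_at[OF assms(1) dg x] unfolding differentiable_def by blast
    show "(\<lambda>x. bp (f x) (g x)) differentiable at x"
      using bounded_bilinear.FDERIV[OF assms(2) F G] unfolding differentiable_def by blast
  qed
  have "Ck k U (dirD v (\<lambda>x. bp (f x) (g x)))" for v
  proof (rule Ck_cong[OF assms(1)])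
    have f: "Ck k U f" and g: "Ck k U g" using Suc.prems Ck_mono by blast+
    have f': "Ck k U (dirD v f)" and g': "Ck k U (dirD v g)" using Suc.prems by auto
    show "Ck k U (\<lambda>x. bp (f x) (dirD v g x) + bp (dirD v f x) (g x))"
      using Ck_add[OF assms(1) Suc.IH[OF f g'] Suc.IH[OF f' g]] .
    fix x assume x: "x \<in> U"
    show "bp (f x) (dirD v g x) + bp (dirD v f x) (g x) = dirD v (\<lambda>x. bp (f x) (g x)) x"
      using dirD_bil[OF assms(2) diff_on_at[OF assms(1) df x] diff_on_at[OF assms(1) dg x]] by simp
  qed
  then show ?case using d by simp
qed

lemma Ck_inverse:
  fixes f :: "complex \<Rightarrow> complex"
  assumes "open U" "\<And>x. x \<in> U \<Longrightarrow> f x \<noteq> 0"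
  shows "Ck k U f \<Longrightarrow> Ck k U (\<lambda>x. inverse (f x))"
proof (induction k)
  case 0 then show ?case by simp
next
  case (Suc k)
  have df: "f differentiable_on U" using Suc.prems by auto
  have fk: "Ck k U f" using Suc.prems Ck_mono by blast
  have ij: "Ck k U (\<lambda>x. inverse (f x))" using Suc.IH[OF fk] .
  have d: "(\<lambda>x. inverse (f x)) differentiable_on U"
    unfolding differentiable_on_eq_differentiable_at[OF assms(1)]
  proof
    fix x assume x: "x \<in> U"
    obtain F where F: "(f has_derivative F) (at x)"
      using diff_on_at[OF assms(1) df x] unfolding differentiable_def by blast
    show "(\<lambda>x. inverse (f x)) differentiable at x"
      using Deriv.has_derivative_inverse[OF assms(2)[OF x] F] unfolding differentiable_def by blast
  qed
  have "Ck k U (dirD v (\<lambda>x. inverse (f x)))" for v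
  proof (rule Ck_cong[OF assms(1)])
    have f': "Ck k U (dirD v f)" using Suc.prems by auto
    have "Ck k U (\<lambda>x. inverse (f x) * dirD v f x * inverse (f x))"
      using Ck_bil[OF assms(1) bounded_bilinear_mult Ck_bil[OF assms(1) bounded_bilinear_mult ij f'] ij] .
    then show "Ck k U (\<lambda>x. - (inverse (f x) * dirD v f x * inverse (f x)))"
      using Ck_lin[OF assms(1) bounded_linear_minus[OF bounded_linear_ident]] by auto
    fix x assume x: "x \<in> U"
    show "- (inverse (f x) * dirD v f x * inverse (f x)) = dirD v (\<lambda>x. inverse (f x)) x"
      using dirD_inverse[OF diff_on_at[OF assms(1) df x] assms(2)[OF x]] by simp
  qed
  then show ?case using d by simp
qed

lemma sm_add: "open U \<Longrightarrow> sm U f \<Longrightarrow> sm U g \<Longrightarrow> sm U (\<lambda>x. f x + g x)"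
  unfolding sm_def using Ck_add by blast
lemma sm_lin: "open U \<Longrightarrow> bounded_linear L \<Longrightarrow> sm U f \<Longrightarrow> sm U (\<lambda>x. L (f x))"
  unfolding sm_def using Ck_lin by blast
lemma sm_bil: "open U \<Longrightarrow> bounded_bilinear bp \<Longrightarrow> sm U f \<Longrightarrow> sm U g \<Longrightarrow> sm U (\<lambda>x. bp (f x) (g x))"
  unfolding sm_def using Ck_bil by blast
lemma sm_const: "sm U (\<lambda>x. c)"
  unfolding sm_def using Ck_const by blast
lemma sm_inverse: "open U \<Longrightarrow> (\<And>x. x \<in> U \<Longrightarrow> f x \<noteq> 0) \<Longrightarrow> sm U f \<Longrightarrow> sm U (\<lambda>x. inverse (f x :: complex))"
  unfolding sm_def using Ck_inverse by blast

lemma mixed_est: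
  fixes f :: "complex \<Rightarrow> 'b::real_normed_vector"
  assumes U: "open U" "p \<in> U" and df: "f differentiable_on U"
    and L: "(dirD u f has_derivative L) (at p)" and e: "e > 0"
  shows "\<exists>d>0. \<forall>s. 0 < s \<and> s < d \<longrightarrow>
     norm (f (p + s *\<^sub>R u + s *\<^sub>R v) - f (p + s *\<^sub>R u) - f (p + s *\<^sub>R v) + f p - (s^2) *\<^sub>R L v)
       \<le> e * (s^2) * (2 * norm u + norm v)"
proof -
  obtain r where r: "r > 0" "ball p r \<subseteq> U" using U openE by blast
  have bl: "bounded_linear L" using L has_derivative_at_alt by blast
  obtain d1 where d1: "d1 > 0" "\<And>y. norm (y - p) < d1 \<Longrightarrow>
      norm (dirD u f y - dirD u f p - L (y - p)) \<le> e * norm (y - p)"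
    using L e unfolding has_derivative_at_alt by blast
  define d where "d = min d1 r / (norm u + norm v + 1)"
  have den: "norm u + norm v + 1 > 0" by (smt (verit) norm_ge_zero)
  have dpos: "d > 0" using d1 r den by (simp add: d_def)
  have "\<forall>s. 0 < s \<and> s < d \<longrightarrow>
     norm (f (p + s *\<^sub>R u + s *\<^sub>R v) - f (p + s *\<^sub>R u) - f (p + s *\<^sub>R v) + f p - (s^2) *\<^sub>R L v)
       \<le> e * (s^2) * (2 * norm u + norm v)"
  proof (intro allI impI)
    fix s :: real assume s: "0 < s \<and> s < d"
    have small: "norm w < min d1 r" if "norm w \<le> s * (norm u + norm v)" for w
    proof -
      have "s * (norm u + norm v) \<le> s * (norm u + norm v + 1)" using s by simp
      also have "\<dots> < d * (norm u + norm v + 1)"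
        using s den by (intro mult_strict_right_mono) auto
      also have "\<dots> = min d1 r" using den by (simp add: d_def)
      finally show ?thesis using that by linarith
    qed
    have inU: "p + w \<in> U" if "norm w \<le> s * (norm u + norm v)" for w
      using small[OF that] r by (auto simp: dist_norm)
    have est: "norm (dirD u f (p + w) - dirD u f p - L w) \<le> e * norm w"
      if "norm w \<le> s * (norm u + norm v)" for w
      using d1(2)[of "p + w"] small[OF that] by simp
    have nw1: "norm (t *\<^sub>R u + s *\<^sub>R v) \<le> s * (norm u + norm v)" if "t \<in> {0..s}" for t
    proof -
      have "norm (t *\<^sub>R u + s *\<^sub>R v) \<le> \<bar>t\<bar> * norm u + \<bar>s\<bar> * norm v"
        using norm_triangle_ineq[of "t *\<^sub>R u" "s *\<^sub>R v"] by simp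
      also have "\<dots> \<le> s * norm u + s * norm v" using that s by (auto intro: mult_right_mono)
      finally show ?thesis by (simp add: algebra_simps)
    qed
    have nw2: "norm (t *\<^sub>R u) \<le> s * (norm u + norm v)" if "t \<in> {0..s}" for t
    proof -
      have "norm (t *\<^sub>R u) \<le> s * norm u" using that s by (auto intro: mult_right_mono)
      also have "\<dots> \<le> s * (norm u + norm v)" using s by (simp add: algebra_simps)
      finally show ?thesis .
    qed
    have nw3: "norm (s *\<^sub>R v) \<le> s * (norm u + norm v)"
      using nw1[of 0] s by simp
    define Du where "Du = dirD u f"
    define g where "g t = f (p + t *\<^sub>R u + s *\<^sub>R v) - f (p + t *\<^sub>R u) - t *\<^sub>R (s *\<^sub>R L v)" for t
    have fd: "(f has_derivative frechet_derivative f (at x)) (at x)" if "x \<in> U" for x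
      using diff_on_at[OF U(1) df that] frechet_derivative_works by blast
    have line: "((\<lambda>t. f (a + t *\<^sub>R u)) has_derivative (\<lambda>h. h *\<^sub>R Du (a + t *\<^sub>R u))) (at t within {0..s})"
      if "a + t *\<^sub>R u \<in> U" for a t
    proof -
      have 1: "((\<lambda>t. a + t *\<^sub>R u) has_derivative (\<lambda>h. h *\<^sub>R u)) (at t within {0..s})"
        by (auto intro!: derivative_eq_intros)
      have "((\<lambda>t. f (a + t *\<^sub>R u)) has_derivative (\<lambda>h. frechet_derivative f (at (a + t *\<^sub>R u)) (h *\<^sub>R u))) (at t within {0..s})"
        using has_derivative_compose[OF 1 fd[OF that]] .
      moreover have "linear (frechet_derivative f (at (a + t *\<^sub>R u)))"
        using fd[OF that] has_derivative_linear by blast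
      ultimately show ?thesis unfolding Du_def dirD_def by (simp add: linear_scale)
    qed
    have gder: "(g has_derivative (\<lambda>h. h *\<^sub>R (Du (p + t *\<^sub>R u + s *\<^sub>R v) - Du (p + t *\<^sub>R u) - s *\<^sub>R L v)))
        (at t within {0..s})" if t: "t \<in> {0..s}" for t
    proof -
      have a1: "(p + s *\<^sub>R v) + t *\<^sub>R u \<in> U" using inU[OF nw1[OF t]] by (simp add: algebra_simps)
      have a2: "p + t *\<^sub>R u \<in> U" using inU[OF nw2[OF t]] by simp
      have "((\<lambda>t. f ((p + s *\<^sub>R v) + t *\<^sub>R u) - f (p + t *\<^sub>R u) - t *\<^sub>R (s *\<^sub>R L v)) has_derivative
          (\<lambda>h. h *\<^sub>R Du ((p + s *\<^sub>R v) + t *\<^sub>R u) - h *\<^sub>R Du (p + t *\<^sub>R u) - h *\<^sub>R (s *\<^sub>R L v))) (at t within {0..s})"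
        by (intro has_derivative_diff line a1 a2) (auto intro!: derivative_eq_intros)
      then show ?thesis unfolding g_def by (simp add: algebra_simps scaleR_diff_right)
    qed
    have gbound: "onorm (\<lambda>h. h *\<^sub>R (Du (p + t *\<^sub>R u + s *\<^sub>R v) - Du (p + t *\<^sub>R u) - s *\<^sub>R L v))
        \<le> e * s * (2 * norm u + norm v)" if t: "t \<in> {0..s}" for t
    proof (rule onorm_bound)
      show "0 \<le> e * s * (2 * norm u + norm v)" using e s by simp
      fix h :: real
      have eq: "Du (p + t *\<^sub>R u + s *\<^sub>R v) - Du (p + t *\<^sub>R u) - s *\<^sub>R L v =
         (Du (p + (t *\<^sub>R u + s *\<^sub>R v)) - Du p - L (t *\<^sub>R u + s *\<^sub>R v))
         - (Du (p + t *\<^sub>R u) - Du p - L (t *\<^sub>R u))"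
        using bl by (simp add: algebra_simps linear_simps bounded_linear.linear)
      have "norm (Du (p + t *\<^sub>R u + s *\<^sub>R v) - Du (p + t *\<^sub>R u) - s *\<^sub>R L v)
          \<le> e * norm (t *\<^sub>R u + s *\<^sub>R v) + e * norm (t *\<^sub>R u)"
        unfolding eq using est[OF nw1[OF t]] est[OF nw2[OF t]] Du_def
        by (smt (verit) norm_triangle_ineq4)
      also have "\<dots> \<le> e * (s * (norm u + norm v)) + e * (s * norm u)"
        using nw1[OF t] t s e by (intro add_mono mult_left_mono) (auto intro: mult_right_mono)
      also have "\<dots> = e * s * (2 * norm u + norm v)" by (simp add: algebra_simps)
      finally show "norm (h *\<^sub>R (Du (p + t *\<^sub>R u + s *\<^sub>R v) - Du (p + t *\<^sub>R u) - s *\<^sub>R L v))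
          \<le> e * s * (2 * norm u + norm v) * norm h"
        using e s by (simp add: mult_left_mono mult.commute mult.left_commute)
    qed
    have "norm (g s - g 0) \<le> e * s * (2 * norm u + norm v) * norm (s - 0)"
      by (rule differentiable_bound[where S="{0..s}", OF convex_real_interval(5) gder gbound])
         (use s in auto)
    moreover have "g s - g 0 = f (p + s *\<^sub>R u + s *\<^sub>R v) - f (p + s *\<^sub>R u) - f (p + s *\<^sub>R v) + f p - (s^2) *\<^sub>R L v"
      unfolding g_def by (simp add: power2_eq_square algebra_simps)
    ultimately show "norm (f (p + s *\<^sub>R u + s *\<^sub>R v) - f (p + s *\<^sub>R u) - f (p + s *\<^sub>R v) + f p - (s^2) *\<^sub>R L v)
       \<le> e * (s^2) * (2 * norm u + norm v)"
      using s by (simp add: power2_eq_square algebra_simps)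
  qed
  then show ?thesis using dpos by blast
qed

lemma small_zero:
  fixes x :: "'b::real_normed_vector"
  assumes "C \<ge> 0" "\<And>e. e > 0 \<Longrightarrow> norm x \<le> e * C"
  shows "x = 0"
proof (rule ccontr)
  assume "x \<noteq> 0"
  then have n: "norm x > 0" by simp
  have "norm x \<le> (norm x / (2 * (C + 1))) * C" using assms(2)[of "norm x / (2 * (C + 1))"] n assms(1) by simp
  also have "\<dots> < norm x"
  proof -
    have "C / (2 * (C + 1)) < 1" using assms(1) by (simp add: field_simps)
    then have "norm x * (C / (2 * (C + 1))) < norm x * 1" using n by (intro mult_strict_left_mono) auto
    then show ?thesis by simp
  qed
  finally show False by simp
qed

lemma schwarz:
  fixes f :: "complex \<Rightarrow> 'b::real_normed_vector"
  assumes U: "open U" "p \<in> U" and df: "f differentiable_on U"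
    and du: "dirD u f differentiable (at p)" and dv: "dirD v f differentiable (at p)"
  shows "dirD v (dirD u f) p = dirD u (dirD v f) p"
proof -
  obtain L where L: "(dirD u f has_derivative L) (at p)" using du unfolding differentiable_def by blast
  obtain M where M: "(dirD v f has_derivative M) (at p)" using dv unfolding differentiable_def by blast
  have "L v - M u = 0"
  proof (rule small_zero[where C="3 * (norm u + norm v)"])
    show "0 \<le> 3 * (norm u + norm v)" by simp
    fix e :: real assume e: "e > 0"
    obtain d1 where d1: "d1 > 0" "\<And>s. 0 < s \<and> s < d1 \<Longrightarrow>
      norm (f (p + s *\<^sub>R u + s *\<^sub>R v) - f (p + s *\<^sub>R u) - f (p + s *\<^sub>R v) + f p - (s^2) *\<^sub>R L v)
       \<le> e * (s^2) * (2 * norm u + norm v)"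
      using mixed_est[OF U df L e, of v] by blast
    obtain d2 where d2: "d2 > 0" "\<And>s. 0 < s \<and> s < d2 \<Longrightarrow>
      norm (f (p + s *\<^sub>R v + s *\<^sub>R u) - f (p + s *\<^sub>R v) - f (p + s *\<^sub>R u) + f p - (s^2) *\<^sub>R M u)
       \<le> e * (s^2) * (2 * norm v + norm u)"
      using mixed_est[OF U df M e, of u] by blast
    define s where "s = min d1 d2 / 2"
    have s: "0 < s" "s < d1" "s < d2" using d1 d2 by (auto simp: s_def)
    define X where "X = f (p + s *\<^sub>R u + s *\<^sub>R v) - f (p + s *\<^sub>R u) - f (p + s *\<^sub>R v) + f p"
    have X2: "f (p + s *\<^sub>R v + s *\<^sub>R u) - f (p + s *\<^sub>R v) - f (p + s *\<^sub>R u) + f p = X"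
      unfolding X_def by (simp add: algebra_simps)
    have a: "norm (X - (s^2) *\<^sub>R L v) \<le> e * (s^2) * (2 * norm u + norm v)"
      using d1(2)[of s] s unfolding X_def by simp
    have b: "norm (X - (s^2) *\<^sub>R M u) \<le> e * (s^2) * (2 * norm v + norm u)"
      using d2(2)[of s] s X2 by simp
    have "(s^2) *\<^sub>R (L v - M u) = (X - (s^2) *\<^sub>R M u) - (X - (s^2) *\<^sub>R L v)"
      by (simp add: algebra_simps)
    then have "norm ((s^2) *\<^sub>R (L v - M u)) \<le> e * (s^2) * (2 * norm u + norm v) + e * (s^2) * (2 * norm v + norm u)"
      using a b norm_triangle_ineq4 by (smt (verit))
    also have "\<dots> = (s^2) * (e * (3 * (norm u + norm v)))" by (simp add: algebra_simps)
    finally have "(s^2) * norm (L v - M u) \<le> (s^2) * (e * (3 * (norm u + norm v)))" by simp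
    then show "norm (L v - M u) \<le> e * (3 * (norm u + norm v))"
      using s by (simp add: mult_le_cancel_left_pos)
  qed
  then show ?thesis using dirD_eq[OF L] dirD_eq[OF M] by simp
qed

lemma cbil_comm: "cbil a b = cbil b a"
  unfolding cbil_def by (simp add: mult.commute)
lemma cbil_add1[simp]: "cbil (a + b) c = cbil a c + cbil b c"
  unfolding cbil_def by (simp add: distrib_right sum.distrib)
lemma cbil_add2[simp]: "cbil c (a + b) = cbil c a + cbil c b"
  unfolding cbil_def by (simp add: distrib_left sum.distrib)
lemma cbil_diff1[simp]: "cbil (a - b) c = cbil a c - cbil b c"
  unfolding cbil_def by (simp add: left_diff_distrib sum_subtractf)
lemma cbil_diff2[simp]: "cbil c (a - b) = cbil c a - cbil c b"
  unfolding cbil_def by (simp add: right_diff_distrib sum_subtractf)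
lemma cbil_neg1[simp]: "cbil (- a) c = - cbil a c"
  unfolding cbil_def by (simp add: sum_negf)
lemma cbil_neg2[simp]: "cbil c (- a) = - cbil c a"
  unfolding cbil_def by (simp add: sum_negf)
lemma cbil_smul1[simp]: "cbil (k *s a) c = k * cbil a c"
  unfolding cbil_def by (simp add: sum_distrib_left mult.assoc)
lemma cbil_smul2[simp]: "cbil c (k *s a) = k * cbil c a"
  unfolding cbil_def by (simp add: sum_distrib_left mult.left_commute)
lemma cbil_zero1[simp]: "cbil 0 c = 0" unfolding cbil_def by simp
lemma cbil_zero2[simp]: "cbil c 0 = 0" unfolding cbil_def by simp

lemma cbil_scaleR1: "cbil (r *\<^sub>R a) c = r *\<^sub>R cbil a c"
  unfolding cbil_def by (simp add: scaleR_sum_right)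

lemma cbil_scaleR2: "cbil c (r *\<^sub>R a) = r *\<^sub>R cbil c a"
  unfolding cbil_def by (simp add: scaleR_sum_right)

lemma sRc: "(r::real) *\<^sub>R (z::complex) = complex_of_real r * z"
  by (simp add: scaleR_conv_of_real)

lemma bb_cbil: "bounded_bilinear cbil"
proof -
  have "bilinear cbil"
    unfolding bilinear_def
  proof (intro conjI allI)
    fix x :: "complex^5"
    show "linear (cbil x)"
      by (rule linearI) (simp_all add: cbil_scaleR2)
    show "linear (\<lambda>y. cbil y x)"
      by (rule linearI) (simp_all add: cbil_scaleR1)
  qed
  then show ?thesis using bilinear_conv_bounded_bilinear by blast
qed

lemma bb_smul: "bounded_bilinear (\<lambda>(c::complex) (v::complex^5). c *s v)"
proof -
  have "bilinear (\<lambda>(c::complex) (v::complex^5). c *s v)"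
    unfolding bilinear_def
  proof (intro conjI allI)
    fix x :: complex and y :: "complex^5"
    show "linear (\<lambda>v::complex^5. x *s v)"
      by (rule linearI) (simp_all add: vec_eq_iff sRc algebra_simps)
    show "linear (\<lambda>c::complex. c *s y)"
      by (rule linearI) (simp_all add: vec_eq_iff sRc algebra_simps)
  qed
  then show ?thesis using bilinear_conv_bounded_bilinear by blast
qed

lemma bl_cvec: "bounded_linear cvec"
proof -
  have "linear cvec"
    by (rule linearI) (simp_all add: cvec_def vec_eq_iff sRc)
  then show ?thesis using linear_conv_bounded_linear by blast
qed

lemma cbil_cvec: "cbil (cvec a) (cvec b) = complex_of_real (a \<bullet> b)"
  unfolding cbil_def cvec_def inner_vec_def by simp

definition dzbs :: "(complex \<Rightarrow> complex) \<Rightarrow> complex \<Rightarrow> complex" where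
  "dzbs f p = (dirD 1 f p + \<i> * dirD \<i> f p) / 2"

lemma dzv_local: assumes "open U" "q \<in> U" "\<And>x. x \<in> U \<Longrightarrow> f x = g x" shows "dzv f q = dzv g q"
  unfolding dzv_def by (simp add: dirD_local[OF assms])
lemma dzbv_local: assumes "open U" "q \<in> U" "\<And>x. x \<in> U \<Longrightarrow> f x = g x" shows "dzbv f q = dzbv g q"
  unfolding dzbv_def by (simp add: dirD_local[OF assms])
lemma dzs_local: assumes "open U" "q \<in> U" "\<And>x. x \<in> U \<Longrightarrow> f x = g x" shows "dzs f q = dzs g q"
  unfolding dzs_def by (simp add: dirD_local[OF assms])
lemma dzbs_local: assumes "open U" "q \<in> U" "\<And>x. x \<in> U \<Longrightarrow> f x = g x" shows "dzbs f q = dzbs g q"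
  unfolding dzbs_def by (simp add: dirD_local[OF assms])

lemma dzs_cbil:
  assumes "f differentiable (at q)" "g differentiable (at q)"
  shows "dzs (\<lambda>x. cbil (f x) (g x)) q = cbil (dzv f q) (g q) + cbil (f q) (dzv g q)"
  unfolding dzs_def dzv_def dirD_bil[OF bb_cbil assms]
  by (simp add: cbil_comm[of "f q"] field_simps)

lemma dzbs_cbil:
  assumes "f differentiable (at q)" "g differentiable (at q)"
  shows "dzbs (\<lambda>x. cbil (f x) (g x)) q = cbil (dzbv f q) (g q) + cbil (f q) (dzbv g q)"
  unfolding dzbs_def dzbv_def dirD_bil[OF bb_cbil assms]
  by (simp add: cbil_comm[of "f q"] field_simps)

lemma dzv_smul:
  assumes "c differentiable (at q)" "f differentiable (at q)"
  shows "dzv (\<lambda>x. c x *s f x) q = dzs c q *s f q + c q *s dzv f q"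
  unfolding dzs_def dzv_def dirD_bil[OF bb_smul assms]
  by (simp add: vec_eq_iff field_simps)

lemma dzbv_smul:
  assumes "c differentiable (at q)" "f differentiable (at q)"
  shows "dzbv (\<lambda>x. c x *s f x) q = dzbs c q *s f q + c q *s dzbv f q"
  unfolding dzbs_def dzbv_def dirD_bil[OF bb_smul assms]
  by (simp add: vec_eq_iff field_simps)

lemma dzs_mult:
  assumes "a differentiable (at q)" "b differentiable (at q)"
  shows "dzs (\<lambda>x. a x * b x) q = dzs a q * b q + a q * dzs b q"
  unfolding dzs_def dirD_bil[OF bounded_bilinear_mult assms]
  by (simp add: field_simps)

lemma dzbs_mult:
  assumes "a differentiable (at q)" "b differentiable (at q)"
  shows "dzbs (\<lambda>x. a x * b x) q = dzbs a q * b q + a q * dzbs b q"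
  unfolding dzbs_def dirD_bil[OF bounded_bilinear_mult assms]
  by (simp add: field_simps)

lemma dzv_add:
  assumes "f differentiable (at q)" "g differentiable (at q)"
  shows "dzv (\<lambda>x. f x + g x) q = dzv f q + dzv g q"
  unfolding dzv_def dirD_add[OF assms] by (simp add: vec_eq_iff field_simps)
lemma dzbv_add:
  assumes "f differentiable (at q)" "g differentiable (at q)"
  shows "dzbv (\<lambda>x. f x + g x) q = dzbv f q + dzbv g q"
  unfolding dzbv_def dirD_add[OF assms] by (simp add: vec_eq_iff field_simps)
lemma dzs_add:
  assumes "f differentiable (at q)" "g differentiable (at q)"
  shows "dzs (\<lambda>x. f x + g x) q = dzs f q + dzs g q"
  unfolding dzs_def dirD_add[OF assms] by (simp add: field_simps)
lemma dzbs_add: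
  assumes "f differentiable (at q)" "g differentiable (at q)"
  shows "dzbs (\<lambda>x. f x + g x) q = dzbs f q + dzbs g q"
  unfolding dzbs_def dirD_add[OF assms] by (simp add: field_simps)

lemma dirD_neg:
  assumes "f differentiable (at q)"
  shows "dirD v (\<lambda>x. - f x) q = - dirD v f q"
  using dirD_lin[OF bounded_linear_minus[OF bounded_linear_ident] assms] by simp

lemma dirD_sub:
  assumes "f differentiable (at q)" "g differentiable (at q)"
  shows "dirD v (\<lambda>x. f x - g x) q = dirD v f q - dirD v g q"
proof -
  have "(\<lambda>x. - g x) differentiable (at q)" using assms(2) by (rule differentiable_minus)
  then show ?thesis using dirD_add[OF assms(1), of "\<lambda>x. - g x"] dirD_neg[OF assms(2)] by simp
qed

lemma dzv_sub:
  assumes "f differentiable (at q)" "g differentiable (at q)"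
  shows "dzv (\<lambda>x. f x - g x) q = dzv f q - dzv g q"
  unfolding dzv_def dirD_sub[OF assms] by (simp add: vec_eq_iff field_simps)
lemma dzbv_sub:
  assumes "f differentiable (at q)" "g differentiable (at q)"
  shows "dzbv (\<lambda>x. f x - g x) q = dzbv f q - dzbv g q"
  unfolding dzbv_def dirD_sub[OF assms] by (simp add: vec_eq_iff field_simps)
lemma dzs_sub:
  assumes "f differentiable (at q)" "g differentiable (at q)"
  shows "dzs (\<lambda>x. f x - g x) q = dzs f q - dzs g q"
  unfolding dzs_def dirD_sub[OF assms] by (simp add: field_simps)
lemma dzbs_sub:
  assumes "f differentiable (at q)" "g differentiable (at q)"
  shows "dzbs (\<lambda>x. f x - g x) q = dzbs f q - dzbs g q"
  unfolding dzbs_def dirD_sub[OF assms] by (simp add: field_simps)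

lemma dzv_const[simp]: "dzv (\<lambda>x. c) q = 0"
  unfolding dzv_def dirD_const by simp
lemma dzbv_const[simp]: "dzbv (\<lambda>x. c) q = 0"
  unfolding dzbv_def dirD_const by simp
lemma dzs_const[simp]: "dzs (\<lambda>x. c) q = 0"
  unfolding dzs_def dirD_const by simp
lemma dzbs_const[simp]: "dzbs (\<lambda>x. c) q = 0"
  unfolding dzbs_def dirD_const by simp

lemma dzs_inverse:
  assumes "f differentiable (at q)" "f q \<noteq> 0"
  shows "dzs (\<lambda>x. inverse (f x)) q = - dzs f q / (f q)^2"
  unfolding dzs_def dirD_inverse[OF assms] using assms(2)
  by (simp add: field_simps power2_eq_square)

lemma sm_sub: "open U \<Longrightarrow> sm U f \<Longrightarrow> sm U g \<Longrightarrow> sm U (\<lambda>x. f x - g x)"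
proof -
  assume a: "open U" "sm U f" "sm U g"
  have m: "sm U (\<lambda>x. - g x)" using sm_lin[OF a(1) bounded_linear_minus[OF bounded_linear_ident] a(3)] by simp
  show ?thesis using sm_add[OF a(1) a(2) m] by simp
qed

lemma sm_cbil: "open U \<Longrightarrow> sm U f \<Longrightarrow> sm U g \<Longrightarrow> sm U (\<lambda>x. cbil (f x) (g x))"
  using sm_bil[OF _ bb_cbil] by blast
lemma sm_smul: "open U \<Longrightarrow> sm U (c::complex\<Rightarrow>complex) \<Longrightarrow> sm U (f::complex\<Rightarrow>complex^5) \<Longrightarrow> sm U (\<lambda>x. c x *s f x)"
  using sm_bil[OF _ bb_smul, of U c f] by simp
lemma sm_mult: "open U \<Longrightarrow> sm U (a::complex\<Rightarrow>complex) \<Longrightarrow> sm U b \<Longrightarrow> sm U (\<lambda>x. a x * b x)"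
  using sm_bil[OF _ bounded_bilinear_mult] by blast
lemma sm_cvec: "open U \<Longrightarrow> sm U f \<Longrightarrow> sm U (\<lambda>x. cvec (f x))"
  using sm_lin[OF _ bl_cvec] by blast

lemma sm_dzv: "open U \<Longrightarrow> sm U f \<Longrightarrow> sm U (dzv f)"
proof -
  assume a: "open U" "sm U f"
  have "sm U (\<lambda>x. (1/2::complex) *s (dirD 1 f x - \<i> *s dirD \<i> f x))"
    by (intro sm_smul sm_sub sm_const sm_dirD a)
  then show ?thesis unfolding dzv_def[abs_def] .
qed
lemma sm_dzbv: "open U \<Longrightarrow> sm U f \<Longrightarrow> sm U (dzbv f)"
proof -
  assume a: "open U" "sm U f"
  have "sm U (\<lambda>x. (1/2::complex) *s (dirD 1 f x + \<i> *s dirD \<i> f x))"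
    by (intro sm_smul sm_add sm_const sm_dirD a)
  then show ?thesis unfolding dzbv_def[abs_def] .
qed
lemma sm_dzs: "open U \<Longrightarrow> sm U (f::complex\<Rightarrow>complex) \<Longrightarrow> sm U (dzs f)"
proof -
  assume a: "open U" "sm U f"
  have "sm U (\<lambda>x. (dirD 1 f x - \<i> * dirD \<i> f x) * (1/2))"
    by (intro sm_mult sm_sub sm_const sm_dirD a)
  then show ?thesis unfolding dzs_def[abs_def] by simp
qed
lemma sm_dzbs: "open U \<Longrightarrow> sm U (f::complex\<Rightarrow>complex) \<Longrightarrow> sm U (dzbs f)"
proof -
  assume a: "open U" "sm U f"
  have "sm U (\<lambda>x. (dirD 1 f x + \<i> * dirD \<i> f x) * (1/2))"
    by (intro sm_mult sm_add sm_const sm_dirD a)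
  then show ?thesis unfolding dzbs_def[abs_def] by simp
qed

lemma dzv_smul_const:
  assumes "f differentiable (at q)"
  shows "dzv (\<lambda>x. c *s f x) q = c *s dzv f q"
  using dzv_smul[of "\<lambda>x. c" q f] assms by simp

lemma dirD_smulc:
  assumes "f differentiable (at q)"
  shows "dirD v (\<lambda>x. c *s f x) q = c *s dirD v (f :: complex \<Rightarrow> complex^5) q"
proof -
  have "bounded_linear (\<lambda>y::complex^5. c *s y)"
    using bounded_bilinear.bounded_linear_right[OF bb_smul] by simp
  then show ?thesis using dirD_lin[OF _ assms] by blast
qed

lemma smulc_diff: "(\<lambda>x. c *s (f::complex\<Rightarrow>complex^5) x) differentiable (at q)" if dd: "f differentiable (at q)"
proof -
  have bl: "bounded_linear (\<lambda>y::complex^5. c *s y)"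
    using bounded_bilinear.bounded_linear_right[OF bb_smul] by simp
  obtain F where F: "(f has_derivative F) (at q)" using dd unfolding differentiable_def by blast
  show ?thesis using bounded_linear.has_derivative[OF bl F] unfolding differentiable_def by blast
qed

lemma dzv_commute:
  assumes "open U" "q \<in> U" "sm U f"
  shows "dzbv (dzv f) q = dzv (dzbv f) q"
proof -
  have d1: "dirD 1 f differentiable (at q)" and di: "dirD \<i> f differentiable (at q)"
    using sm_at[OF assms(1) sm_dirD[OF assms(3)] assms(2)] by auto
  have sw: "dirD \<i> (dirD 1 f) q = dirD 1 (dirD \<i> f) q"
    using schwarz[OF assms(1,2) sm_diff[OF assms(3)] d1 di] .
  have l: "dirD v (\<lambda>x. (1/2::complex) *s (dirD 1 f x - \<i> *s dirD \<i> f x)) q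
      = (1/2::complex) *s (dirD v (dirD 1 f) q - \<i> *s dirD v (dirD \<i> f) q)" for v
    using d1 di by (simp add: dirD_smulc dirD_sub differentiable_diff smulc_diff)
  have l2: "dirD v (\<lambda>x. (1/2::complex) *s (dirD 1 f x + \<i> *s dirD \<i> f x)) q
      = (1/2::complex) *s (dirD v (dirD 1 f) q + \<i> *s dirD v (dirD \<i> f) q)" for v
    using d1 di by (simp add: dirD_smulc dirD_add differentiable_add smulc_diff)
  have e1: "dzv f = (\<lambda>x. (1/2::complex) *s (dirD 1 f x - \<i> *s dirD \<i> f x))"
    unfolding dzv_def by blast
  have e2: "dzbv f = (\<lambda>x. (1/2::complex) *s (dirD 1 f x + \<i> *s dirD \<i> f x))"
    unfolding dzbv_def by blast
  have a: "dzbv (dzv f) q = (1/2::complex) *s (dirD 1 (dzv f) q + \<i> *s dirD \<i> (dzv f) q)"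
    by (simp only: dzbv_def)
  have b: "dzv (dzbv f) q = (1/2::complex) *s (dirD 1 (dzbv f) q - \<i> *s dirD \<i> (dzbv f) q)"
    by (simp only: dzv_def)
  have c: "dirD v (dzv f) q = (1/2::complex) *s (dirD v (dirD 1 f) q - \<i> *s dirD v (dirD \<i> f) q)" for v
    unfolding e1 by (rule l)
  have d: "dirD v (dzbv f) q = (1/2::complex) *s (dirD v (dirD 1 f) q + \<i> *s dirD v (dirD \<i> f) q)" for v
    unfolding e2 by (rule l2)
  show ?thesis unfolding a b c d sw
    by (simp add: vec_eq_iff field_simps)
qed

locale geo =
  fixes U :: "complex set" and \<Phi> n1 n2 :: "complex \<Rightarrow> real^5"
  assumes conf: "conformal_immersion_S4 U \<Phi>" and fr: "oriented_normal_frame U \<Phi> n1 n2"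
begin

definition "P = Phic \<Phi>"
definition "X q = cvec (dirD 1 \<Phi> q)"
definition "Y q = cvec (dirD \<i> \<Phi> q)"
abbreviation "E \<equiv> e2lam \<Phi>"
abbreviation "Pz \<equiv> dzv P"
abbreviation "Pb \<equiv> dzbv P"
abbreviation "Pzz \<equiv> dzv Pz"
abbreviation "Pzb \<equiv> dzv Pb"
abbreviation "Ez \<equiv> dzs E"
abbreviation "h \<equiv> h0 \<Phi>"
abbreviation "H \<equiv> Hvec \<Phi>"
abbreviation "npj \<equiv> nproj \<Phi>"

lemma opU: "open U" using conf unfolding conformal_immersion_S4_def by blast

lemma smPhi: "sm U \<Phi>" using conf smooth_sm unfolding conformal_immersion_S4_def by blast

lemma P_def': "P = (\<lambda>q. cvec (\<Phi> q))" unfolding P_def Phic_def by blast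

lemma smP: "sm U P" unfolding P_def' using sm_cvec[OF opU smPhi] .

lemma smX: "sm U X" unfolding X_def[abs_def] using sm_cvec[OF opU sm_dirD[OF smPhi]] .
lemma smY: "sm U Y" unfolding Y_def[abs_def] using sm_cvec[OF opU sm_dirD[OF smPhi]] .

lemma dP: "q \<in> U \<Longrightarrow> dirD v P q = cvec (dirD v \<Phi> q)"
  unfolding P_def' using dirD_lin[OF bl_cvec sm_at[OF opU smPhi]] by blast

lemma E_eq: "E q = cbil (X q) (X q)"
  unfolding e2lam_def X_def cbil_cvec by (simp add: power2_norm_eq_inner)

lemma E_fun: "E = (\<lambda>q. cbil (X q) (X q))" using E_eq by blast

lemma E_nz: "q \<in> U \<Longrightarrow> E q \<noteq> 0"
  using conf unfolding conformal_immersion_S4_def e2lam_def by auto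

lemma smE: "sm U E" unfolding E_fun using sm_cbil[OF opU smX smX] .
lemma smEi: "sm U (\<lambda>q. inverse (E q))" using sm_inverse[OF opU E_nz smE] by blast

lemma smPz: "sm U Pz" using sm_dzv[OF opU smP] .
lemma smPb: "sm U Pb" using sm_dzbv[OF opU smP] .
lemma smPzz: "sm U Pzz" using sm_dzv[OF opU smPz] .
lemma smPzb: "sm U Pzb" using sm_dzv[OF opU smPb] .
lemma smEz: "sm U Ez" using sm_dzs[OF opU smE] .

lemma Pz_eq: "q \<in> U \<Longrightarrow> Pz q = (1/2::complex) *s (X q - \<i> *s Y q)"
  unfolding dzv_def X_def Y_def using dP by simp
lemma Pb_eq: "q \<in> U \<Longrightarrow> Pb q = (1/2::complex) *s (X q + \<i> *s Y q)"
  unfolding dzbv_def X_def Y_def using dP by simp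
lemma X_eq: assumes "q \<in> U" shows "X q = Pz q + Pb q"
  unfolding Pz_eq[OF assms] Pb_eq[OF assms] by (simp add: vec_eq_iff field_simps)
lemma Y_eq: assumes "q \<in> U" shows "Y q = \<i> *s (Pz q - Pb q)"
  unfolding Pz_eq[OF assms] Pb_eq[OF assms] by (simp add: vec_eq_iff field_simps)

lemma F1: "q \<in> U \<Longrightarrow> cbil (P q) (P q) = 1"
  using conf unfolding conformal_immersion_S4_def P_def' cbil_cvec
  by (simp add: power2_norm_eq_inner[symmetric])

lemma F2: assumes "q \<in> U" shows "cbil (X q) (X q) = E q" "cbil (Y q) (Y q) = E q" "cbil (X q) (Y q) = 0"
proof -
  have c: "norm (dirD 1 \<Phi> q) = norm (dirD \<i> \<Phi> q)" "dirD 1 \<Phi> q \<bullet> dirD \<i> \<Phi> q = 0"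
    using conf assms unfolding conformal_immersion_S4_def by auto
  show "cbil (X q) (X q) = E q" using E_eq by simp
  show "cbil (Y q) (Y q) = E q" unfolding E_eq X_def Y_def cbil_cvec
    using c by (simp add: power2_norm_eq_inner[symmetric])
  show "cbil (X q) (Y q) = 0" unfolding X_def Y_def cbil_cvec using c by simp
qed

lemma F3: assumes "q \<in> U" shows "cbil (Pz q) (Pz q) = 0" "cbil (Pb q) (Pb q) = 0" "cbil (Pz q) (Pb q) = E q / 2"
  using F2[OF assms] cbil_comm[of "Y q" "X q"] unfolding Pz_eq[OF assms] Pb_eq[OF assms]
  by (simp_all add: field_simps)

lemma dzs_zero: assumes "\<And>x. x \<in> U \<Longrightarrow> F x = c" "q \<in> U" shows "dzs F q = 0"
  using dzs_local[OF opU assms(2), of F "\<lambda>x. c"] assms(1) by simp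
lemma dzbs_zero: assumes "\<And>x. x \<in> U \<Longrightarrow> F x = c" "q \<in> U" shows "dzbs F q = 0"
  using dzbs_local[OF opU assms(2), of F "\<lambda>x. c"] assms(1) by simp

lemma atU: "sm U f \<Longrightarrow> q \<in> U \<Longrightarrow> f differentiable (at q)"
  using sm_at[OF opU] by blast

lemma F4: assumes "q \<in> U" shows "cbil (P q) (Pz q) = 0" "cbil (P q) (Pb q) = 0"
proof -
  have "dzs (\<lambda>x. cbil (P x) (P x)) q = 0" using dzs_zero[OF F1 assms] .
  then show "cbil (P q) (Pz q) = 0"
    unfolding dzs_cbil[OF atU[OF smP assms] atU[OF smP assms]] by (simp add: cbil_comm)
  have "dzbs (\<lambda>x. cbil (P x) (P x)) q = 0" using dzbs_zero[OF F1 assms] .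
  then show "cbil (P q) (Pb q) = 0"
    unfolding dzbs_cbil[OF atU[OF smP assms] atU[OF smP assms]] by (simp add: cbil_comm)
qed

lemma npj_alt: assumes "q \<in> U"
  shows "npj q v = v - cbil v (P q) *s P q - (2 / E q) *s (cbil v (Pb q) *s Pz q + cbil v (Pz q) *s Pb q)"
proof -
  have "npj q v = v - cbil v (P q) *s P q - (1 / E q) *s (cbil v (X q) *s X q + cbil v (Y q) *s Y q)"
    unfolding nproj_def P_def X_def Y_def ..
  also have "\<dots> = v - cbil v (P q) *s P q - (2 / E q) *s (cbil v (Pb q) *s Pz q + cbil v (Pz q) *s Pb q)"
    unfolding X_eq[OF assms] Y_eq[OF assms]
    by (simp add: vec_eq_iff field_simps)
  finally show ?thesis .
qed

lemma F3c: assumes "q \<in> U" shows "cbil (Pb q) (Pz q) = E q / 2"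
  using F3(3)[OF assms] cbil_comm by metis
lemma F4c: assumes "q \<in> U" shows "cbil (Pz q) (P q) = 0" "cbil (Pb q) (P q) = 0"
  using F4[OF assms] cbil_comm by metis+

lemmas rel1 = F1 F3 F3c F4 F4c

definition nrm :: "complex \<Rightarrow> complex^5 \<Rightarrow> bool" where
  "nrm q v \<longleftrightarrow> cbil v (P q) = 0 \<and> cbil v (Pz q) = 0 \<and> cbil v (Pb q) = 0"

lemma npj_id: assumes "q \<in> U" "nrm q v" shows "npj q v = v"
  using assms(2) unfolding npj_alt[OF assms(1)] nrm_def by simp

lemma npj_nrm: assumes "q \<in> U" shows "nrm q (npj q v)"
  unfolding nrm_def npj_alt[OF assms] using rel1[OF assms] E_nz[OF assms]
  by (simp add: field_simps)

lemma nrm_c: "nrm q u \<Longrightarrow> cbil (P q) u = 0 \<and> cbil (Pz q) u = 0 \<and> cbil (Pb q) u = 0"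
  unfolding nrm_def by (simp add: cbil_comm)

lemma cbil_npj: assumes "q \<in> U" "nrm q u" shows "cbil u (npj q v) = cbil u v"
  using assms(2) unfolding npj_alt[OF assms(1)] nrm_def by simp

lemma npj_add: "npj q (a + b) = npj q a + npj q b"
  unfolding nproj_def by (simp add: vec_eq_iff field_simps)
lemma npj_sub: "npj q (a - b) = npj q a - npj q b"
  unfolding nproj_def by (simp add: vec_eq_iff field_simps)
lemma npj_smul: "npj q (c *s a) = c *s npj q a"
  unfolding nproj_def by (simp add: vec_eq_iff field_simps)

lemma npj_P: assumes "q \<in> U" shows "npj q (P q) = 0" "npj q (Pz q) = 0" "npj q (Pb q) = 0"
  unfolding npj_alt[OF assms] using rel1[OF assms] E_nz[OF assms]
  by (simp_all add: vec_eq_iff field_simps)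

lemma nrm_smul: "nrm q v \<Longrightarrow> nrm q (c *s v)" unfolding nrm_def by simp
lemma nrm_add: "nrm q v \<Longrightarrow> nrm q w \<Longrightarrow> nrm q (v + w)" unfolding nrm_def by simp
lemma nrm_sub: "nrm q v \<Longrightarrow> nrm q w \<Longrightarrow> nrm q (v - w)" unfolding nrm_def by simp

lemma DbPz: assumes "q \<in> U" shows "dzbv Pz q = Pzb q"
  using dzv_commute[OF opU assms smP] .

lemma dzs_cmul: assumes "f differentiable (at q)" shows "dzs (\<lambda>x. f x * c) q = dzs f q * c"
  using dzs_mult[OF assms, of "\<lambda>x. c"] by simp

lemma S: assumes q: "q \<in> U"
  shows "cbil (P q) (Pzz q) = 0" "cbil (P q) (Pzb q) = - E q / 2" "cbil (Pz q) (Pzz q) = 0"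
        "cbil (Pb q) (Pzb q) = 0" "cbil (Pz q) (Pzb q) = 0" "cbil (Pb q) (Pzz q) = Ez q / 2"
proof -
  have dP: "P differentiable (at q)" and dPz: "Pz differentiable (at q)" and dPb: "Pb differentiable (at q)"
    using atU[OF smP q] atU[OF smPz q] atU[OF smPb q] .
  have "dzs (\<lambda>x. cbil (P x) (Pz x)) q = 0" by (rule dzs_zero[OF _ q]) (simp add: F4(1))
  then show "cbil (P q) (Pzz q) = 0" unfolding dzs_cbil[OF dP dPz] using F3[OF q] by simp
  have "dzs (\<lambda>x. cbil (P x) (Pb x)) q = 0" by (rule dzs_zero[OF _ q]) (simp add: F4(2))
  then have "E q + 2 * cbil (P q) (Pzb q) = 0" unfolding dzs_cbil[OF dP dPb] using F3[OF q]
    by (simp add: field_simps)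
  then show "cbil (P q) (Pzb q) = - E q / 2"
    by (simp add: field_simps eq_neg_iff_add_eq_0 add.commute)
  have "dzs (\<lambda>x. cbil (Pz x) (Pz x)) q = 0" by (rule dzs_zero[OF _ q]) (simp add: F3(1))
  then show "cbil (Pz q) (Pzz q) = 0" unfolding dzs_cbil[OF dPz dPz] by (simp add: cbil_comm)
  have "dzs (\<lambda>x. cbil (Pb x) (Pb x)) q = 0" by (rule dzs_zero[OF _ q]) (simp add: F3(2))
  then show "cbil (Pb q) (Pzb q) = 0" unfolding dzs_cbil[OF dPb dPb] by (simp add: cbil_comm)
  have "dzbs (\<lambda>x. cbil (Pz x) (Pz x)) q = 0" by (rule dzbs_zero[OF _ q]) (simp add: F3(1))
  then show "cbil (Pz q) (Pzb q) = 0" unfolding dzbs_cbil[OF dPz dPz] DbPz[OF q] by (simp add: cbil_comm)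
  have "dzs (\<lambda>x. cbil (Pz x) (Pb x)) q = dzs (\<lambda>x. E x * (1/2)) q"
    using dzs_local[OF opU q, of "\<lambda>x. cbil (Pz x) (Pb x)" "\<lambda>x. E x * (1/2)"] F3(3) by simp
  also have "\<dots> = Ez q * (1/2)" by (rule dzs_cmul[OF atU[OF smE q]])
  finally show "cbil (Pb q) (Pzz q) = Ez q / 2" unfolding dzs_cbil[OF dPz dPb] using \<open>cbil (Pz q) (Pzb q) = 0\<close>
    by (simp add: cbil_comm)
qed

lemma h_eq: assumes q: "q \<in> U" shows "h q = 2 *s Pzz q - (2 * Ez q / E q) *s Pz q"
proof -
  have "h q = 2 *s npj q (Pzz q)" unfolding h0_def P_def ..
  also have "\<dots> = 2 *s Pzz q - (2 * Ez q / E q) *s Pz q"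
    unfolding npj_alt[OF q] using S[OF q] cbil_comm[of "Pzz q"] E_nz[OF q]
    by (simp add: vec_eq_iff field_simps)
  finally show ?thesis .
qed

lemma Pzz_eq: assumes q: "q \<in> U" shows "Pzz q = (Ez q / E q) *s Pz q + (1/2::complex) *s h q"
  unfolding h_eq[OF q] using E_nz[OF q] by (simp add: vec_eq_iff field_simps)

lemma H_eq: assumes q: "q \<in> U" shows "H q = (2 / E q) *s Pzb q + P q"
proof -
  have "H q = (2 / E q) *s npj q (Pzb q)" unfolding Hvec_def P_def ..
  also have "\<dots> = (2 / E q) *s Pzb q + P q"
    unfolding npj_alt[OF q] using S[OF q] cbil_comm[of "Pzb q"] E_nz[OF q]
    by (simp add: vec_eq_iff field_simps)
  finally show ?thesis .
qed

lemma Pzb_eq: assumes q: "q \<in> U" shows "Pzb q = (E q / 2) *s (H q - P q)"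
  unfolding H_eq[OF q] using E_nz[OF q] by (simp add: vec_eq_iff field_simps)

lemma nrm_h: assumes q: "q \<in> U" shows "nrm q (h q)"
  unfolding h0_def using nrm_smul[OF npj_nrm[OF q]] .
lemma nrm_H: assumes q: "q \<in> U" shows "nrm q (H q)"
  unfolding Hvec_def using nrm_smul[OF npj_nrm[OF q]] .

lemma nproj_fun: "(\<lambda>q. npj q (v q)) = (\<lambda>q. v q - cbil (v q) (P q) *s P q
     - inverse (E q) *s (cbil (v q) (X q) *s X q + cbil (v q) (Y q) *s Y q))"
  unfolding nproj_def P_def X_def Y_def by (simp add: divide_inverse)

lemma sm_npj: assumes "sm U v" shows "sm U (\<lambda>q. npj q (v q))"
  unfolding nproj_fun
  by (intro sm_sub sm_smul sm_add sm_cbil opU assms smP smX smY smEi)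

lemma smh: "sm U h"
proof -
  have "sm U (\<lambda>q. (\<lambda>x. 2) q *s npj q (Pzz q))" by (intro sm_smul sm_const sm_npj smPzz opU)
  then show ?thesis unfolding h0_def[abs_def] P_def by simp
qed

lemma smH: "sm U H"
proof -
  have "sm U (\<lambda>q. (2 * inverse (E q)) *s npj q (Pzb q))" by (intro sm_smul sm_mult sm_const smEi sm_npj smPzb opU)
  then show ?thesis unfolding Hvec_def[abs_def] P_def by (simp add: divide_inverse)
qed

lemma nfield:
  assumes sx: "sm U \<xi>" and nx: "\<forall>x\<in>U. nrm x (\<xi> x)" and q: "q \<in> U"
  shows "dzv \<xi> q - npj q (dzv \<xi> q) = - cbil (\<xi> q) (H q) *s Pz q - (cbil (\<xi> q) (h q) / E q) *s Pb q"
proof -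
  have dx: "\<xi> differentiable (at q)" using atU[OF sx q] .
  have dP: "P differentiable (at q)" and dPz: "Pz differentiable (at q)" and dPb: "Pb differentiable (at q)"
    using atU[OF smP q] atU[OF smPz q] atU[OF smPb q] .
  have n: "cbil (\<xi> q) (P q) = 0" "cbil (\<xi> q) (Pz q) = 0" "cbil (\<xi> q) (Pb q) = 0"
    using nx q unfolding nrm_def by auto
  have "dzs (\<lambda>x. cbil (\<xi> x) (P x)) q = 0" by (rule dzs_zero[OF _ q]) (use nx in \<open>simp add: nrm_def\<close>)
  then have d1: "cbil (dzv \<xi> q) (P q) = 0" unfolding dzs_cbil[OF dx dP] using n by simp
  have "dzs (\<lambda>x. cbil (\<xi> x) (Pz x)) q = 0" by (rule dzs_zero[OF _ q]) (use nx in \<open>simp add: nrm_def\<close>)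
  then have "cbil (dzv \<xi> q) (Pz q) = - cbil (\<xi> q) (Pzz q)" unfolding dzs_cbil[OF dx dPz]
    by (simp add: eq_neg_iff_add_eq_0)
  also have "\<dots> = - cbil (\<xi> q) (h q) / 2" unfolding Pzz_eq[OF q] using n by simp
  finally have d2: "cbil (dzv \<xi> q) (Pz q) = - cbil (\<xi> q) (h q) / 2" .
  have "dzs (\<lambda>x. cbil (\<xi> x) (Pb x)) q = 0" by (rule dzs_zero[OF _ q]) (use nx in \<open>simp add: nrm_def\<close>)
  then have "cbil (dzv \<xi> q) (Pb q) = - cbil (\<xi> q) (Pzb q)" unfolding dzs_cbil[OF dx dPb]
    by (simp add: eq_neg_iff_add_eq_0)
  also have "\<dots> = - E q / 2 * cbil (\<xi> q) (H q)" unfolding Pzb_eq[OF q] using n by simp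
  finally have d3: "cbil (dzv \<xi> q) (Pb q) = - E q / 2 * cbil (\<xi> q) (H q)" .
  show ?thesis unfolding npj_alt[OF q] d1 d2 d3 using E_nz[OF q]
    by (simp add: vec_eq_iff field_simps)
qed

lemma nfield_c:
  assumes "sm U \<xi>" "\<forall>x\<in>U. nrm x (\<xi> x)" "q \<in> U" "nrm q u"
  shows "cbil u (dzv \<xi> q) = cbil u (npj q (dzv \<xi> q))"
proof -
  have "cbil u (dzv \<xi> q) - cbil u (npj q (dzv \<xi> q)) = cbil u (dzv \<xi> q - npj q (dzv \<xi> q))" by simp
  also have "\<dots> = cbil u (- cbil (\<xi> q) (H q) *s Pz q - (cbil (\<xi> q) (h q) / E q) *s Pb q)"
    by (rule arg_cong[where f="cbil u"], rule nfield[OF assms(1-3)])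
  also have "\<dots> = 0" using assms(4) unfolding nrm_def by simp
  finally show ?thesis by simp
qed

lemma npj_Pzb: assumes q: "q \<in> U" shows "npj q (Pzb q) = (E q / 2) *s H q"
  unfolding Pzb_eq[OF q] npj_smul npj_sub npj_id[OF q nrm_H[OF q]] npj_P[OF q] by simp

lemma codazzi: assumes q: "q \<in> U" shows "npj q (dzbv h q) = E q *s npj q (dzv H q)"
proof -
  define c where "c x = 2 * Ez x * inverse (E x)" for x
  have smc: "sm U c" unfolding c_def[abs_def] by (intro sm_mult sm_const smEz smEi opU)
  have hU: "h x = 2 *s Pzz x - c x *s Pz x" if "x \<in> U" for x
    unfolding h_eq[OF that] c_def by (simp add: divide_inverse)
  have dPzz: "Pzz differentiable (at q)" and dPz: "Pz differentiable (at q)" and dc: "c differentiable (at q)"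
    using atU[OF smPzz q] atU[OF smPz q] atU[OF smc q] .
  have d1: "(\<lambda>x. 2 *s Pzz x) differentiable (at q)" using smulc_diff[OF dPzz] .
  have d2: "(\<lambda>x. c x *s Pz x) differentiable (at q)" using atU[OF sm_smul[OF opU smc smPz] q] .
  have "dzbv h q = dzbv (\<lambda>x. 2 *s Pzz x - c x *s Pz x) q" by (rule dzbv_local[OF opU q]) (simp add: hU)
  also have "\<dots> = dzbv (\<lambda>x. 2 *s Pzz x) q - dzbv (\<lambda>x. c x *s Pz x) q" using dzbv_sub[OF d1 d2] .
  also have "dzbv (\<lambda>x. 2 *s Pzz x) q = 2 *s dzbv Pzz q"
    using dzbv_smul[of "\<lambda>x. 2" q Pzz] dPzz by simp
  also have "dzbv (\<lambda>x. c x *s Pz x) q = dzbs c q *s Pz q + c q *s Pzb q"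
    using dzbv_smul[OF dc dPz] DbPz[OF q] by simp
  also have "dzbv Pzz q = dzv Pzb q"
  proof -
    have "dzbv Pzz q = dzv (dzbv Pz) q" using dzv_commute[OF opU q smPz] .
    also have "\<dots> = dzv Pzb q" by (rule dzv_local[OF opU q]) (simp add: DbPz)
    finally show ?thesis .
  qed
  finally have Dbh: "dzbv h q = 2 *s dzv Pzb q - (dzbs c q *s Pz q + c q *s Pzb q)" .
  have lhs: "npj q (dzbv h q) = 2 *s npj q (dzv Pzb q) - (Ez q) *s H q"
    unfolding Dbh npj_sub npj_add npj_smul npj_P[OF q] npj_Pzb[OF q] c_def using E_nz[OF q]
    by (simp add: vec_eq_iff field_simps)
  define k where "k x = 2 * inverse (E x)" for x
  have smk: "sm U k" unfolding k_def[abs_def] by (intro sm_mult sm_const smEi opU)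
  have HU: "H x = k x *s Pzb x + P x" if "x \<in> U" for x
    unfolding H_eq[OF that] k_def by (simp add: divide_inverse)
  have dk: "k differentiable (at q)" and dPzb: "Pzb differentiable (at q)" and dP: "P differentiable (at q)"
    using atU[OF smk q] atU[OF smPzb q] atU[OF smP q] .
  have d3: "(\<lambda>x. k x *s Pzb x) differentiable (at q)" using atU[OF sm_smul[OF opU smk smPzb] q] .
  have dkq: "dzs k q = - 2 * Ez q / (E q)^2"
  proof -
    have "dzs k q = dzs (\<lambda>x. 2 * inverse (E x)) q" unfolding k_def by simp
    also have "\<dots> = 2 * dzs (\<lambda>x. inverse (E x)) q"
      using dzs_mult[of "\<lambda>x. 2" q "\<lambda>x. inverse (E x)"] atU[OF smEi q] by simp
    also have "\<dots> = - 2 * Ez q / (E q)^2" using dzs_inverse[OF atU[OF smE q] E_nz[OF q]] by simp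
    finally show ?thesis .
  qed
  have "dzv H q = dzv (\<lambda>x. k x *s Pzb x + P x) q" by (rule dzv_local[OF opU q]) (simp add: HU)
  also have "\<dots> = dzs k q *s Pzb q + k q *s dzv Pzb q + Pz q"
    using dzv_add[OF d3 dP] dzv_smul[OF dk dPzb] by simp
  finally have DH: "dzv H q = dzs k q *s Pzb q + k q *s dzv Pzb q + Pz q" .
  have rhs: "E q *s npj q (dzv H q) = 2 *s npj q (dzv Pzb q) - (Ez q) *s H q"
    unfolding DH npj_add npj_smul npj_P[OF q] npj_Pzb[OF q] dkq k_def using E_nz[OF q]
    by (simp add: vec_eq_iff field_simps power2_eq_square)
  show ?thesis using lhs rhs by simp
qed

end

lemma orth_ne: "(x::real^5) \<bullet> y = 0 \<Longrightarrow> x \<noteq> 0 \<Longrightarrow> x \<noteq> y"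
  by auto

lemma real5_zero:
  fixes a b c d e z :: "real^5"
  assumes nz: "a \<noteq> 0" "b \<noteq> 0" "c \<noteq> 0" "d \<noteq> 0" "e \<noteq> 0"
    and o: "a \<bullet> b = 0" "a \<bullet> c = 0" "a \<bullet> d = 0" "a \<bullet> e = 0" "b \<bullet> c = 0" "b \<bullet> d = 0" "b \<bullet> e = 0"
      "c \<bullet> d = 0" "c \<bullet> e = 0" "d \<bullet> e = 0"
    and z: "z \<bullet> a = 0" "z \<bullet> b = 0" "z \<bullet> c = 0" "z \<bullet> d = 0" "z \<bullet> e = 0"
  shows "z = 0"
proof (rule ccontr)
  assume z0: "z \<noteq> 0"
  define S where "S = {a, b, c, d, e, z}"
  have ci: "x \<bullet> y = y \<bullet> x" for x y :: "real^5" by (rule inner_commute)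
  have po: "pairwise orthogonal S"
    unfolding S_def pairwise_def orthogonal_def using o z by (auto simp: inner_commute)
  have "0 \<notin> S" unfolding S_def using nz z0 by auto
  then have "independent S" using pairwise_orthogonal_independent[OF po] by blast
  then have "card S \<le> 5" using independent_bound[of S] by simp
  moreover have "card S = 6"
  proof -
    have dist: "a \<noteq> b" "a \<noteq> c" "a \<noteq> d" "a \<noteq> e" "a \<noteq> z" "b \<noteq> c" "b \<noteq> d" "b \<noteq> e" "b \<noteq> z"
      "c \<noteq> d" "c \<noteq> e" "c \<noteq> z" "d \<noteq> e" "d \<noteq> z" "e \<noteq> z"
      using o z nz z0 by (auto simp: inner_commute)
    then show ?thesis unfolding S_def by simp
  qed
  ultimately show False by simp
qed

lemma cvec_zero: "(\<And>v. v \<in> B \<Longrightarrow> cbil w (cvec v) = 0) \<Longrightarrow>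
   (\<And>z. (\<And>v. v \<in> B \<Longrightarrow> z \<bullet> v = 0) \<Longrightarrow> z = 0) \<Longrightarrow> w = 0"
proof -
  assume a: "\<And>v. v \<in> B \<Longrightarrow> cbil w (cvec v) = 0" and b: "\<And>z. (\<And>v. v \<in> B \<Longrightarrow> z \<bullet> v = 0) \<Longrightarrow> z = 0"
  define wr where "wr = (\<chi> j. Re (w $ j))"
  define wi where "wi = (\<chi> j. Im (w $ j))"
  have "Re (cbil w (cvec v)) = wr \<bullet> v" "Im (cbil w (cvec v)) = wi \<bullet> v" for v
    unfolding cbil_def cvec_def wr_def wi_def inner_vec_def by (simp_all add: Re_sum Im_sum)
  then have "wr = 0" "wi = 0" using a b by (metis zero_complex.simps)+
  then show "w = 0" unfolding wr_def wi_def by (simp add: vec_eq_iff complex_eq_iff)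
qed

context geo begin

definition "N1 q = cvec (n1 q)"
definition "N2 q = cvec (n2 q)"

lemma frame: assumes q: "q \<in> U"
  shows "norm (n1 q) = 1" "norm (n2 q) = 1" "n1 q \<bullet> n2 q = 0" "n1 q \<bullet> \<Phi> q = 0" "n2 q \<bullet> \<Phi> q = 0"
    "n1 q \<bullet> dirD 1 \<Phi> q = 0" "n2 q \<bullet> dirD 1 \<Phi> q = 0" "n1 q \<bullet> dirD \<i> \<Phi> q = 0" "n2 q \<bullet> dirD \<i> \<Phi> q = 0"
  using fr q unfolding oriented_normal_frame_def by auto

lemma smN: "sm U N1" "sm U N2"
  using fr sm_cvec[OF opU smooth_sm] unfolding oriented_normal_frame_def N1_def[abs_def] N2_def[abs_def] by auto

lemma N_rel: assumes q: "q \<in> U"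
  shows "cbil (N1 q) (N1 q) = 1" "cbil (N2 q) (N2 q) = 1" "cbil (N1 q) (N2 q) = 0" "cbil (N2 q) (N1 q) = 0"
    "cbil (N1 q) (P q) = 0" "cbil (N2 q) (P q) = 0" "cbil (N1 q) (X q) = 0" "cbil (N2 q) (X q) = 0"
    "cbil (N1 q) (Y q) = 0" "cbil (N2 q) (Y q) = 0"
  using frame[OF q] unfolding N1_def N2_def P_def' X_def Y_def cbil_cvec
  by (simp_all add: power2_norm_eq_inner[symmetric] inner_commute)

lemma nrm_N: assumes q: "q \<in> U" shows "nrm q (N1 q)" "nrm q (N2 q)"
  unfolding nrm_def Pz_eq[OF q] Pb_eq[OF q] using N_rel[OF q] by simp_all

lemma complete: assumes q: "q \<in> U" and u: "nrm q u"
  shows "u = cbil u (N1 q) *s N1 q + cbil u (N2 q) *s N2 q"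
proof -
  define w where "w = u - (cbil u (N1 q) *s N1 q + cbil u (N2 q) *s N2 q)"
  have uP: "cbil u (P q) = 0" and uX: "cbil u (X q) = 0" and uY: "cbil u (Y q) = 0"
    using u unfolding nrm_def X_eq[OF q] Y_eq[OF q] by auto
  have PX: "\<Phi> q \<bullet> dirD 1 \<Phi> q = 0" "\<Phi> q \<bullet> dirD \<i> \<Phi> q = 0"
  proof -
    have "cbil (P q) (X q) = 0" "cbil (P q) (Y q) = 0"
      unfolding X_eq[OF q] Y_eq[OF q] using F4[OF q] by simp_all
    then show "\<Phi> q \<bullet> dirD 1 \<Phi> q = 0" "\<Phi> q \<bullet> dirD \<i> \<Phi> q = 0"
      unfolding P_def' X_def Y_def cbil_cvec by simp_all
  qed
  have nz: "\<Phi> q \<noteq> 0" "dirD 1 \<Phi> q \<noteq> 0" "dirD \<i> \<Phi> q \<noteq> 0" "n1 q \<noteq> 0" "n2 q \<noteq> 0"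
  proof -
    have c: "norm (\<Phi> q) = 1" "dirD 1 \<Phi> q \<noteq> 0" "norm (dirD 1 \<Phi> q) = norm (dirD \<i> \<Phi> q)"
      using conf q unfolding conformal_immersion_S4_def by auto
    show "\<Phi> q \<noteq> 0" using c(1) by auto
    show "dirD 1 \<Phi> q \<noteq> 0" using c(2) .
    show "dirD \<i> \<Phi> q \<noteq> 0" using c(2,3) by (metis norm_eq_zero)
    show "n1 q \<noteq> 0" "n2 q \<noteq> 0" using frame(1,2)[OF q] by auto
  qed
  have cv: "P q = cvec (\<Phi> q)" "X q = cvec (dirD 1 \<Phi> q)" "Y q = cvec (dirD \<i> \<Phi> q)"
    unfolding P_def' X_def Y_def by auto
  have "w = 0"
  proof (rule cvec_zero[where B="{\<Phi> q, dirD 1 \<Phi> q, dirD \<i> \<Phi> q, n1 q, n2 q}"])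
    have wP: "cbil w (P q) = 0" "cbil w (X q) = 0" "cbil w (Y q) = 0" "cbil w (N1 q) = 0" "cbil w (N2 q) = 0"
      unfolding w_def using uP uX uY N_rel[OF q] by simp_all
    fix v assume "v \<in> {\<Phi> q, dirD 1 \<Phi> q, dirD \<i> \<Phi> q, n1 q, n2 q}"
    then show "cbil w (cvec v) = 0"
      using wP cv unfolding N1_def N2_def by auto
  next
    fix z assume zz: "\<And>v. v \<in> {\<Phi> q, dirD 1 \<Phi> q, dirD \<i> \<Phi> q, n1 q, n2 q} \<Longrightarrow> z \<bullet> v = 0"
    have ab: "dirD 1 \<Phi> q \<bullet> dirD \<i> \<Phi> q = 0" using conf q unfolding conformal_immersion_S4_def by auto
    have fc: "\<Phi> q \<bullet> n1 q = 0" "\<Phi> q \<bullet> n2 q = 0" "dirD 1 \<Phi> q \<bullet> n1 q = 0" "dirD 1 \<Phi> q \<bullet> n2 q = 0"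
       "dirD \<i> \<Phi> q \<bullet> n1 q = 0" "dirD \<i> \<Phi> q \<bullet> n2 q = 0"
      using frame[OF q] by (simp_all add: inner_commute)
    show "z = 0"
      by (rule real5_zero[OF nz PX fc(1,2) ab fc(3-6) frame(3)[OF q]]) (simp_all add: zz)
  qed
  then show ?thesis unfolding w_def by simp
qed

end

context geo begin

definition "ee1 = e1 n1 n2"
definition "ee2 = e2 n1 n2"

lemma ee_eq: "ee1 q = (1 / complex_of_real (sqrt 2)) *s (N1 q + \<i> *s N2 q)"
  "ee2 q = (1 / complex_of_real (sqrt 2)) *s (N1 q - \<i> *s N2 q)"
  unfolding ee1_def ee2_def e1_def e2_def N1_def N2_def by auto

lemma sm_ee: "sm U ee1" "sm U ee2"
proof -
  have f1: "ee1 = (\<lambda>q. (1 / complex_of_real (sqrt 2)) *s (N1 q + \<i> *s N2 q))"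
    by (rule ext, rule ee_eq(1))
  have f2: "ee2 = (\<lambda>q. (1 / complex_of_real (sqrt 2)) *s (N1 q - \<i> *s N2 q))"
    by (rule ext, rule ee_eq(2))
  show "sm U ee1" unfolding f1 by (intro sm_smul sm_add sm_const smN opU)
  show "sm U ee2" unfolding f2 by (intro sm_smul sm_sub sm_const smN opU)
qed

lemma nrm_ee: assumes q: "q \<in> U" shows "nrm q (ee1 q)" "nrm q (ee2 q)"
  unfolding ee_eq
  by (rule nrm_smul, rule nrm_add, rule nrm_N[OF q], rule nrm_smul, rule nrm_N[OF q])
     (rule nrm_smul, rule nrm_sub, rule nrm_N[OF q], rule nrm_smul, rule nrm_N[OF q])

lemma sq2: "(1 / complex_of_real (sqrt 2)) * (1 / complex_of_real (sqrt 2)) = 1/2"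
proof -
  have "complex_of_real (sqrt 2) * complex_of_real (sqrt 2) = 2"
    by (simp flip: of_real_mult)
  then show ?thesis by (simp add: field_simps)
qed

lemma pairing: assumes q: "q \<in> U" and u: "nrm q u" and v: "nrm q v"
  shows "cbil u (ee1 q) * cbil v (ee2 q) + cbil u (ee2 q) * cbil v (ee1 q) = cbil u v"
    "cbil u (ee1 q) * cbil v (ee1 q) = (cbil u (N1 q) + \<i> * cbil u (N2 q)) * (cbil v (N1 q) + \<i> * cbil v (N2 q)) / 2"
    "cbil u (ee2 q) * cbil v (ee2 q) = (cbil u (N1 q) - \<i> * cbil u (N2 q)) * (cbil v (N1 q) - \<i> * cbil v (N2 q)) / 2"
proof -
  have cv: "cbil u v = cbil u (N1 q) * cbil v (N1 q) + cbil u (N2 q) * cbil v (N2 q)"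
    by (subst complete[OF q v]) (simp add: cbil_comm)
  define s where "s = 1 / complex_of_real (sqrt 2)"
  have ss: "s * s = 1/2" unfolding s_def using sq2 .
  have e: "cbil w (ee1 q) = s * (cbil w (N1 q) + \<i> * cbil w (N2 q))"
          "cbil w (ee2 q) = s * (cbil w (N1 q) - \<i> * cbil w (N2 q))" for w
    unfolding ee_eq s_def by (simp_all add: add_divide_distrib diff_divide_distrib)
  define a where "a = cbil u (N1 q)"
  define b where "b = cbil u (N2 q)"
  define c where "c = cbil v (N1 q)"
  define d where "d = cbil v (N2 q)"
  have ii: "\<i> * \<i> = (-1::complex)" by simp
  have "cbil u (ee1 q) * cbil v (ee2 q) + cbil u (ee2 q) * cbil v (ee1 q)
     = (s * s) * ((a + \<i> * b) * (c - \<i> * d) + (a - \<i> * b) * (c + \<i> * d))"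
    unfolding e a_def b_def c_def d_def by algebra
  also have "\<dots> = (s * s) * (2 * (a * c) - 2 * (\<i> * \<i>) * (b * d))" by algebra
  also have "\<dots> = a * c + b * d" unfolding ss ii by simp
  finally show "cbil u (ee1 q) * cbil v (ee2 q) + cbil u (ee2 q) * cbil v (ee1 q) = cbil u v"
    unfolding cv a_def b_def c_def d_def .
  have "cbil u (ee1 q) * cbil v (ee1 q) = (s * s) * ((a + \<i> * b) * (c + \<i> * d))"
    unfolding e a_def b_def c_def d_def by algebra
  then show "cbil u (ee1 q) * cbil v (ee1 q) = (cbil u (N1 q) + \<i> * cbil u (N2 q)) * (cbil v (N1 q) + \<i> * cbil v (N2 q)) / 2"
    unfolding ss a_def b_def c_def d_def by simp
  have "cbil u (ee2 q) * cbil v (ee2 q) = (s * s) * ((a - \<i> * b) * (c - \<i> * d))"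
    unfolding e a_def b_def c_def d_def by algebra
  then show "cbil u (ee2 q) * cbil v (ee2 q) = (cbil u (N1 q) - \<i> * cbil u (N2 q)) * (cbil v (N1 q) - \<i> * cbil v (N2 q)) / 2"
    unfolding ss a_def b_def c_def d_def by simp
qed

abbreviation "T1 \<equiv> nablaT \<Phi> (psiF \<Phi>)"

lemma psi_fun: "psiF \<Phi> \<xi> = (\<lambda>x. (cbil (H x) (\<xi> x), cbil (H x) (\<xi> x) *s P x + \<xi> x))"
  unfolding psiF_def P_def by blast

lemma T1_eq:
  assumes sx: "sm U \<xi>" and nx: "\<forall>x\<in>U. nrm x (\<xi> x)" and q: "q \<in> U"
  shows "T1 \<xi> q = (cbil (dzv H q) (\<xi> q), cbil (dzv H q) (\<xi> q) *s P q - (cbil (\<xi> q) (h q) / E q) *s Pb q)"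
proof -
  have dx: "\<xi> differentiable (at q)" and dH: "H differentiable (at q)" and dP: "P differentiable (at q)"
    using atU[OF sx q] atU[OF smH q] atU[OF smP q] .
  have dc: "(\<lambda>x. cbil (H x) (\<xi> x)) differentiable (at q)" using atU[OF sm_cbil[OF opU smH sx] q] .
  have dcP: "(\<lambda>x. cbil (H x) (\<xi> x) *s P x) differentiable (at q)"
    using atU[OF sm_smul[OF opU sm_cbil[OF opU smH sx] smP] q] .
  have f1: "dzs (\<lambda>x. cbil (H x) (\<xi> x)) q = cbil (dzv H q) (\<xi> q) + cbil (H q) (dzv \<xi> q)"
    using dzs_cbil[OF dH dx] .
  have f2: "dzv (\<lambda>x. cbil (H x) (\<xi> x) *s P x + \<xi> x) q
      = (cbil (dzv H q) (\<xi> q) + cbil (H q) (dzv \<xi> q)) *s P q + cbil (H q) (\<xi> q) *s Pz q + dzv \<xi> q"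
    unfolding dzv_add[OF dcP dx] dzv_smul[OF dc dP] f1 ..
  have dP1: "dzP (psiF \<Phi> \<xi>) q = (cbil (dzv H q) (\<xi> q) + cbil (H q) (dzv \<xi> q),
      (cbil (dzv H q) (\<xi> q) + cbil (H q) (dzv \<xi> q)) *s P q + cbil (H q) (\<xi> q) *s Pz q + dzv \<xi> q)"
    unfolding dzP_def psi_fun using f1 f2 by simp
  have hn: "cbil (H q) (npj q (dzv \<xi> q)) = cbil (H q) (dzv \<xi> q)"
    using nfield_c[OF sx nx q nrm_H[OF q]] by simp
  have ps2: "psiF \<Phi> (nablaN \<Phi> \<xi>) q = (cbil (H q) (dzv \<xi> q), cbil (H q) (dzv \<xi> q) *s P q + npj q (dzv \<xi> q))"
    unfolding psi_fun nablaN_def hn ..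
  have nf: "npj q (dzv \<xi> q) = dzv \<xi> q + cbil (\<xi> q) (H q) *s Pz q + (cbil (\<xi> q) (h q) / E q) *s Pb q"
    using nfield[OF sx nx q] by (simp add: vec_eq_iff field_simps)
  show ?thesis
    unfolding nablaT_def dP1 ps2 nf by (simp add: vec_eq_iff field_simps cbil_comm[of "H q"])
qed

lemma sm_nu: "sm U \<xi> \<Longrightarrow> sm U (nablaN \<Phi> \<xi>)"
  unfolding nablaN_def[abs_def] by (intro sm_npj sm_dzv opU)

lemma nrm_nu: "\<forall>x\<in>U. nrm x (nablaN \<Phi> \<xi> x)"
  unfolding nablaN_def using npj_nrm by blast

lemma d2psi_eq:
  assumes sx: "sm U \<xi>" and nx: "\<forall>x\<in>U. nrm x (\<xi> x)" and q: "q \<in> U"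
  defines "A \<equiv> \<lambda>x. cbil (dzv H x) (\<xi> x)" and "K \<equiv> \<lambda>x. cbil (\<xi> x) (h x) * inverse (E x)"
  shows "d2psi \<Phi> \<xi> q = (dzs A q - cbil (dzv H q) (nablaN \<Phi> \<xi> q),
     (dzs A q - cbil (dzv H q) (nablaN \<Phi> \<xi> q)) *s P q + A q *s Pz q
     - (dzs K q - cbil (nablaN \<Phi> \<xi> q) (h q) / E q) *s Pb q - K q *s Pzb q)"
proof -
  have smA: "sm U A" unfolding A_def by (intro sm_cbil sm_dzv smH sx opU)
  have smK: "sm U K" unfolding K_def by (intro sm_mult sm_cbil smh smEi sx opU)
  have TU: "T1 \<xi> x = (A x, A x *s P x - K x *s Pb x)" if "x \<in> U" for x
    unfolding T1_eq[OF sx nx that] A_def K_def by (simp add: divide_inverse)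
  have dA: "A differentiable (at q)" and dK: "K differentiable (at q)" and dP: "P differentiable (at q)"
    and dPb: "Pb differentiable (at q)"
    using atU[OF smA q] atU[OF smK q] atU[OF smP q] atU[OF smPb q] .
  have dAP: "(\<lambda>x. A x *s P x) differentiable (at q)" using atU[OF sm_smul[OF opU smA smP] q] .
  have dKP: "(\<lambda>x. K x *s Pb x) differentiable (at q)" using atU[OF sm_smul[OF opU smK smPb] q] .
  have c1: "dzs (\<lambda>x. fst (T1 \<xi> x)) q = dzs A q"
    by (rule dzs_local[OF opU q]) (simp add: TU)
  have "dzv (\<lambda>x. snd (T1 \<xi> x)) q = dzv (\<lambda>x. A x *s P x - K x *s Pb x) q"
    by (rule dzv_local[OF opU q]) (simp add: TU)
  also have "\<dots> = (dzs A q *s P q + A q *s Pz q) - (dzs K q *s Pb q + K q *s Pzb q)"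
    unfolding dzv_sub[OF dAP dKP] dzv_smul[OF dA dP] dzv_smul[OF dK dPb] ..
  finally have c2: "dzv (\<lambda>x. snd (T1 \<xi> x)) q = (dzs A q *s P q + A q *s Pz q) - (dzs K q *s Pb q + K q *s Pzb q)" .
  have T1nu: "T1 (nablaN \<Phi> \<xi>) q = (cbil (dzv H q) (nablaN \<Phi> \<xi> q),
     cbil (dzv H q) (nablaN \<Phi> \<xi> q) *s P q - (cbil (nablaN \<Phi> \<xi> q) (h q) / E q) *s Pb q)"
    using T1_eq[OF sm_nu[OF sx] nrm_nu q] .
  have "d2psi \<Phi> \<xi> q = dzP (T1 \<xi>) q - T1 (nablaN \<Phi> \<xi>) q"
    unfolding d2psi_def nablaT_def ..
  also have "\<dots> = (dzs A q, (dzs A q *s P q + A q *s Pz q) - (dzs K q *s Pb q + K q *s Pzb q)) - T1 (nablaN \<Phi> \<xi>) q"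
    unfolding dzP_def c1 c2 ..
  finally show ?thesis unfolding T1nu by (simp add: vec_eq_iff field_simps)
qed

lemma Pzb_Pzb: assumes q: "q \<in> U" shows "cbil (Pzb q) (Pzb q) = (E q)^2 / 4 * (cbil (H q) (H q) + 1)"
proof -
  have a: "cbil (H q) (P q) = 0" and b: "cbil (P q) (H q) = 0"
    using nrm_H[OF q] nrm_c[OF nrm_H[OF q]] unfolding nrm_def by auto
  have "cbil (Pzb q) (Pzb q) = (E q / 2) * (E q / 2) * (cbil (H q) (H q) - cbil (H q) (P q) - cbil (P q) (H q) + cbil (P q) (P q))"
    unfolding Pzb_eq[OF q] by (simp add: algebra_simps)
  also have "\<dots> = (E q / 2) * (E q / 2) * (cbil (H q) (H q) + 1)" using a b F1[OF q] by simp
  finally show ?thesis by (simp add: power2_eq_square)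
qed

lemma hbil_form:
  assumes q: "q \<in> U"
  shows "hbil (B, B *s P q + A *s Pz q - C *s Pb q - K *s Pzb q) (B', B' *s P q + A' *s Pz q - C' *s Pb q - K' *s Pzb q)
     = E q / 2 * (B * K' + B' * K) - E q / 2 * (A * C' + A' * C) + (E q)^2 / 4 * (1 + cbil (H q) (H q)) * K * K'"
proof -
  have r: "cbil (P q) (P q) = 1" "cbil (P q) (Pz q) = 0" "cbil (P q) (Pb q) = 0" "cbil (P q) (Pzb q) = - E q / 2"
    "cbil (Pz q) (P q) = 0" "cbil (Pz q) (Pz q) = 0" "cbil (Pz q) (Pb q) = E q / 2" "cbil (Pz q) (Pzb q) = 0"
    "cbil (Pb q) (P q) = 0" "cbil (Pb q) (Pz q) = E q / 2" "cbil (Pb q) (Pb q) = 0" "cbil (Pb q) (Pzb q) = 0"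
    "cbil (Pzb q) (P q) = - E q / 2" "cbil (Pzb q) (Pz q) = 0" "cbil (Pzb q) (Pb q) = 0"
    "cbil (Pzb q) (Pzb q) = (E q)^2 / 4 * (cbil (H q) (H q) + 1)"
    using rel1[OF q] S[OF q] Pzb_Pzb[OF q] cbil_comm[of "Pzb q" "P q"] cbil_comm[of "Pzb q" "Pz q"]
      cbil_comm[of "Pzb q" "Pb q"] by auto
  have "hbil (B, B *s P q + A *s Pz q - C *s Pb q - K *s Pzb q) (B', B' *s P q + A' *s Pz q - C' *s Pb q - K' *s Pzb q)
    = - B * B' + B * B' + B * (K' * (E q / 2)) + B' * (K * (E q / 2)) - A * C' * (E q / 2) - C * A' * (E q / 2)
      + K * K' * ((E q)^2 / 4 * (cbil (H q) (H q) + 1))"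
    unfolding hbil_def by (simp add: r algebra_simps)
  also have "\<dots> = E q / 2 * (B * K' + B' * K) - E q / 2 * (A * C' + A' * C) + (E q)^2 / 4 * (1 + cbil (H q) (H q)) * K * K'"
    by (simp add: field_simps)
  finally show ?thesis .
qed

end

context geo begin

definition "W x = npj x (dzv H x)"
abbreviation "bb \<equiv> nablaNb \<Phi> h"
abbreviation "dd \<equiv> nablaN \<Phi> h"
abbreviation "XX \<equiv> nablaN \<Phi> (nablaNb \<Phi> h)"

lemma smW: "sm U W" unfolding W_def[abs_def] by (intro sm_npj sm_dzv smH opU)
lemma nrm_W: "\<forall>x\<in>U. nrm x (W x)" unfolding W_def using npj_nrm by blast
lemma nrmH: "\<forall>x\<in>U. nrm x (H x)" using nrm_H by blast
lemma nrmh: "\<forall>x\<in>U. nrm x (h x)" using nrm_h by blast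

lemma bb_eq: "x \<in> U \<Longrightarrow> bb x = E x *s W x"
  unfolding nablaNb_def W_def using codazzi by blast

lemma nrm_bb: "x \<in> U \<Longrightarrow> nrm x (bb x)" unfolding nablaNb_def by (rule npj_nrm)
lemma nrm_dd: "x \<in> U \<Longrightarrow> nrm x (dd x)" unfolding nablaN_def by (rule npj_nrm)
lemma nrm_XX: "x \<in> U \<Longrightarrow> nrm x (XX x)" unfolding nablaN_def by (rule npj_nrm)

lemma DH_U: "x \<in> U \<Longrightarrow> dzv H x = W x - cbil (H x) (H x) *s Pz x - (cbil (H x) (h x) / E x) *s Pb x"
  using nfield[OF smH nrmH] unfolding W_def by (simp add: vec_eq_iff field_simps)

lemma A_eq:
  assumes sx: "sm U \<xi>" and nx: "\<forall>x\<in>U. nrm x (\<xi> x)" and q: "q \<in> U"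
  shows "cbil (dzv H q) (\<xi> q) = cbil (\<xi> q) (bb q) / E q"
proof -
  have n: "nrm q (\<xi> q)" using nx q by blast
  have "cbil (dzv H q) (\<xi> q) = cbil (W q) (\<xi> q)"
    unfolding DH_U[OF q] using nrm_c[OF n] by simp
  also have "\<dots> = cbil (\<xi> q) (bb q) / E q"
    unfolding bb_eq[OF q] using E_nz[OF q] by (simp add: cbil_comm)
  finally show ?thesis .
qed

lemma C_eq:
  assumes sx: "sm U \<xi>" and nx: "\<forall>x\<in>U. nrm x (\<xi> x)" and q: "q \<in> U"
  shows "dzs (\<lambda>x. cbil (\<xi> x) (h x) * inverse (E x)) q - cbil (nablaN \<Phi> \<xi> q) (h q) / E q
     = cbil (\<xi> q) (dd q) / E q - cbil (\<xi> q) (h q) * Ez q / (E q)^2"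
proof -
  have n: "nrm q (\<xi> q)" using nx q by blast
  have dx: "\<xi> differentiable (at q)" and dh: "h differentiable (at q)" and dEi: "(\<lambda>x. inverse (E x)) differentiable (at q)"
    using atU[OF sx q] atU[OF smh q] atU[OF smEi q] .
  have dc: "(\<lambda>x. cbil (\<xi> x) (h x)) differentiable (at q)" using atU[OF sm_cbil[OF opU sx smh] q] .
  have "dzs (\<lambda>x. cbil (\<xi> x) (h x) * inverse (E x)) q
     = (cbil (dzv \<xi> q) (h q) + cbil (\<xi> q) (dzv h q)) * inverse (E q) + cbil (\<xi> q) (h q) * (- Ez q / (E q)^2)"
    unfolding dzs_mult[OF dc dEi] dzs_cbil[OF dx dh] dzs_inverse[OF atU[OF smE q] E_nz[OF q]] ..
  also have "cbil (dzv \<xi> q) (h q) = cbil (nablaN \<Phi> \<xi> q) (h q)"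
    using nfield_c[OF sx nx q nrm_h[OF q]] unfolding nablaN_def by (simp add: cbil_comm)
  also have "cbil (\<xi> q) (dzv h q) = cbil (\<xi> q) (dd q)"
    using nfield_c[OF smh nrmh q n] unfolding nablaN_def by simp
  finally have X: "dzs (\<lambda>x. cbil (\<xi> x) (h x) * inverse (E x)) q
     = (cbil (nablaN \<Phi> \<xi> q) (h q) + cbil (\<xi> q) (dd q)) * inverse (E q) + cbil (\<xi> q) (h q) * (- Ez q / (E q)^2)" .
  show ?thesis unfolding X using E_nz[OF q] by (simp add: field_simps power2_eq_square)
qed

lemma B_eq:
  assumes sx: "sm U \<xi>" and nx: "\<forall>x\<in>U. nrm x (\<xi> x)" and q: "q \<in> U"
  shows "dzs (\<lambda>x. cbil (dzv H x) (\<xi> x)) q - cbil (dzv H q) (nablaN \<Phi> \<xi> q)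
     = cbil (\<xi> q) (XX q) / E q - Ez q * cbil (\<xi> q) (bb q) / (E q)^2"
proof -
  have n: "nrm q (\<xi> q)" using nx q by blast
  have dx: "\<xi> differentiable (at q)" and dW: "W differentiable (at q)" and dE: "E differentiable (at q)"
    using atU[OF sx q] atU[OF smW q] atU[OF smE q] .
  have nW: "nrm q (W q)" using nrm_W q by blast
  have AU: "cbil (dzv H x) (\<xi> x) = cbil (W x) (\<xi> x)" if "x \<in> U" for x
  proof -
    have "nrm x (\<xi> x)" using nx that by blast
    then show ?thesis unfolding DH_U[OF that] using nrm_c by simp
  qed
  have "dzs (\<lambda>x. cbil (dzv H x) (\<xi> x)) q = dzs (\<lambda>x. cbil (W x) (\<xi> x)) q"
    by (rule dzs_local[OF opU q]) (simp add: AU)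
  also have "\<dots> = cbil (dzv W q) (\<xi> q) + cbil (W q) (dzv \<xi> q)" using dzs_cbil[OF dW dx] .
  also have "cbil (W q) (dzv \<xi> q) = cbil (W q) (nablaN \<Phi> \<xi> q)"
    using nfield_c[OF sx nx q nW] unfolding nablaN_def .
  finally have 1: "dzs (\<lambda>x. cbil (dzv H x) (\<xi> x)) q = cbil (dzv W q) (\<xi> q) + cbil (W q) (nablaN \<Phi> \<xi> q)" .
  have nn: "nrm q (nablaN \<Phi> \<xi> q)" using nrm_nu q by blast
  have 2: "cbil (dzv H q) (nablaN \<Phi> \<xi> q) = cbil (W q) (nablaN \<Phi> \<xi> q)"
    unfolding DH_U[OF q] using nrm_c[OF nn] by simp
  have dEW: "dzv (\<lambda>x. E x *s W x) q = Ez q *s W q + E q *s dzv W q" using dzv_smul[OF dE dW] .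
  have "XX q = npj q (dzv bb q)" unfolding nablaN_def ..
  also have "dzv bb q = dzv (\<lambda>x. E x *s W x) q" by (rule dzv_local[OF opU q]) (simp add: bb_eq)
  finally have 3: "XX q = Ez q *s W q + E q *s npj q (dzv W q)"
    unfolding dEW npj_add npj_smul npj_id[OF q nW] .
  have 4: "cbil (\<xi> q) (XX q) = Ez q * cbil (\<xi> q) (W q) + E q * cbil (\<xi> q) (dzv W q)"
    unfolding 3 using cbil_npj[OF q n] by simp
  show ?thesis unfolding 1 2 4 bb_eq[OF q] using E_nz[OF q]
    by (simp add: cbil_comm[of "dzv W q"] field_simps power2_eq_square)
qed

lemma d2_form:
  assumes sx: "sm U \<xi>" and nx: "\<forall>x\<in>U. nrm x (\<xi> x)" and q: "q \<in> U"
  shows "d2psi \<Phi> \<xi> q =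
    (cbil (\<xi> q) (XX q) / E q - Ez q * cbil (\<xi> q) (bb q) / (E q)^2,
     (cbil (\<xi> q) (XX q) / E q - Ez q * cbil (\<xi> q) (bb q) / (E q)^2) *s P q
     + (cbil (\<xi> q) (bb q) / E q) *s Pz q
     - (cbil (\<xi> q) (dd q) / E q - cbil (\<xi> q) (h q) * Ez q / (E q)^2) *s Pb q
     - (cbil (\<xi> q) (h q) * inverse (E q)) *s Pzb q)"
proof -
  note d = d2psi_eq[OF sx nx q]
  show ?thesis unfolding d B_eq[OF sx nx q, symmetric] A_eq[OF sx nx q, symmetric] C_eq[OF sx nx q, symmetric]
    by simp
qed

lemma hb_gen:
  assumes sx: "sm U \<xi>" and nx: "\<forall>x\<in>U. nrm x (\<xi> x)" and sy: "sm U \<eta>" and ny: "\<forall>x\<in>U. nrm x (\<eta> x)"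
    and q: "q \<in> U"
  shows "hbil (d2psi \<Phi> \<xi> q) (d2psi \<Phi> \<eta> q) =
    (cbil (\<xi> q) (XX q) * cbil (\<eta> q) (h q) + cbil (\<eta> q) (XX q) * cbil (\<xi> q) (h q)
     - cbil (\<xi> q) (bb q) * cbil (\<eta> q) (dd q) - cbil (\<eta> q) (bb q) * cbil (\<xi> q) (dd q)) / (2 * E q)
    + (1 + cbil (H q) (H q)) / 4 * cbil (\<xi> q) (h q) * cbil (\<eta> q) (h q)"
  unfolding d2_form[OF sx nx q] d2_form[OF sy ny q] hbil_form[OF q] using E_nz[OF q]
  by (simp add: field_simps power2_eq_square)

end

lemma poly_id:
  fixes x1 x2 b1 b2 d1 d2 g1 g2 c iE :: complex
  shows "(iE * (x1 * g1 - b1 * d1) + c * g1 * g1) * (iE * (x2 * g2 - b2 * d2) + c * g2 * g2) =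
    iE^2 *
         (1/4 * (x1*x2+x2*x1) * (g1*g2+g2*g1)
        + 1/4 * (d1*d2+d2*d1) * (b1*b2+b2*b1)
        - 1/2 * (x1*d2+x2*d1) * (b1*g2+b2*g1)
        - 1/2 * (x1*b2+x2*b1) * (d1*g2+d2*g1)
        + 1/2 * (x1*g2+x2*g1) * (d1*b2+d2*b1))
     + c * iE *
         (1/2 * (x1*g2+x2*g1) * (g1*g2+g2*g1)
        - (d1*g2+d2*g1) * (b1*g2+b2*g1)
        + 1/2 * (d1*b2+d2*b1) * (g1*g2+g2*g1))
     + c^2/4 * ((g1*g2+g2*g1) * (g1*g2+g2*g1))"
  by (simp add: field_simps power2_eq_square)

context geo begin

lemma final:
  assumes p: "p \<in> U"
  shows
    "(MontielQ \<Phi> n1 n2 p =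
       (1 / E p) * (cbil (nablaN \<Phi> (nablaNb \<Phi> h) p) (h p)
                  - cbil (nablaN \<Phi> h p) (nablaNb \<Phi> h p))
       + 1/4 * (1 + cbil (H p) (H p)) * cbil (h p) (h p))
     \<and>
     (MontielO \<Phi> n1 n2 p =
       (1 / (E p)\<^sup>2) *
         (1/4 * cbil (nablaN \<Phi> (nablaNb \<Phi> h) p) (nablaN \<Phi> (nablaNb \<Phi> h) p) * cbil (h p) (h p)
        + 1/4 * cbil (nablaN \<Phi> h p) (nablaN \<Phi> h p) * cbil (nablaNb \<Phi> h p) (nablaNb \<Phi> h p)
        - 1/2 * cbil (nablaN \<Phi> (nablaNb \<Phi> h) p) (nablaN \<Phi> h p) * cbil (nablaNb \<Phi> h p) (h p)
        - 1/2 * cbil (nablaN \<Phi> (nablaNb \<Phi> h) p) (nablaNb \<Phi> h p) * cbil (nablaN \<Phi> h p) (h p)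
        + 1/2 * cbil (nablaN \<Phi> (nablaNb \<Phi> h) p) (h p) * cbil (nablaN \<Phi> h p) (nablaNb \<Phi> h p))
     + 1/4 * (1 + cbil (H p) (H p)) * (1 / E p) *
         (1/2 * cbil (nablaN \<Phi> (nablaNb \<Phi> h) p) (h p) * cbil (h p) (h p)
        - cbil (nablaN \<Phi> h p) (h p) * cbil (nablaNb \<Phi> h p) (h p)
        + 1/2 * cbil (nablaN \<Phi> h p) (nablaNb \<Phi> h p) * cbil (h p) (h p))
     + 1/64 * (1 + cbil (H p) (H p))\<^sup>2 * (cbil (h p) (h p) * cbil (h p) (h p)))"
proof -
  have n1: "\<forall>x\<in>U. nrm x (ee1 x)" and n2: "\<forall>x\<in>U. nrm x (ee2 x)" using nrm_ee by blast+
  have Qd: "MontielQ \<Phi> n1 n2 p = 2 * hbil (d2psi \<Phi> ee1 p) (d2psi \<Phi> ee2 p)"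
    unfolding MontielQ_def ee1_def ee2_def ..
  have Od: "MontielO \<Phi> n1 n2 p = hbil (d2psi \<Phi> ee1 p) (d2psi \<Phi> ee1 p) * hbil (d2psi \<Phi> ee2 p) (d2psi \<Phi> ee2 p)"
    unfolding MontielO_def ee1_def ee2_def ..
  define x1 where "x1 = cbil (XX p) (ee1 p)"
  define x2 where "x2 = cbil (XX p) (ee2 p)"
  define b1 where "b1 = cbil (bb p) (ee1 p)"
  define b2 where "b2 = cbil (bb p) (ee2 p)"
  define d1 where "d1 = cbil (dd p) (ee1 p)"
  define d2 where "d2 = cbil (dd p) (ee2 p)"
  define g1 where "g1 = cbil (h p) (ee1 p)"
  define g2 where "g2 = cbil (h p) (ee2 p)"
  have cm: "cbil (ee1 p) (XX p) = x1" "cbil (ee2 p) (XX p) = x2" "cbil (ee1 p) (bb p) = b1" "cbil (ee2 p) (bb p) = b2"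
    "cbil (ee1 p) (dd p) = d1" "cbil (ee2 p) (dd p) = d2" "cbil (ee1 p) (h p) = g1" "cbil (ee2 p) (h p) = g2"
    unfolding x1_def x2_def b1_def b2_def d1_def d2_def g1_def g2_def by (simp_all add: cbil_comm)
  have nX: "nrm p (XX p)" and nb: "nrm p (bb p)" and nd: "nrm p (dd p)" and nh: "nrm p (h p)"
    using nrm_XX[OF p] nrm_bb[OF p] nrm_dd[OF p] nrm_h[OF p] .
  note pr = pairing(1)[OF p]
  have pXX: "cbil (XX p) (XX p) = x1*x2+x2*x1" using pr[OF nX nX] unfolding x1_def x2_def by simp
  have phh: "cbil (h p) (h p) = g1*g2+g2*g1" using pr[OF nh nh] unfolding g1_def g2_def by simp
  have pdd: "cbil (dd p) (dd p) = d1*d2+d2*d1" using pr[OF nd nd] unfolding d1_def d2_def by simp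
  have pbb: "cbil (bb p) (bb p) = b1*b2+b2*b1" using pr[OF nb nb] unfolding b1_def b2_def by simp
  have pXd: "cbil (XX p) (dd p) = x1*d2+x2*d1" using pr[OF nX nd] unfolding x1_def x2_def d1_def d2_def by simp
  have pbh: "cbil (bb p) (h p) = b1*g2+b2*g1" using pr[OF nb nh] unfolding b1_def b2_def g1_def g2_def by simp
  have pXb: "cbil (XX p) (bb p) = x1*b2+x2*b1" using pr[OF nX nb] unfolding x1_def x2_def b1_def b2_def by simp
  have pdh: "cbil (dd p) (h p) = d1*g2+d2*g1" using pr[OF nd nh] unfolding d1_def d2_def g1_def g2_def by simp
  have pXh: "cbil (XX p) (h p) = x1*g2+x2*g1" using pr[OF nX nh] unfolding x1_def x2_def g1_def g2_def by simp
  have pdb: "cbil (dd p) (bb p) = d1*b2+d2*b1" using pr[OF nd nb] unfolding d1_def d2_def b1_def b2_def by simp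
  define iE where "iE = 1 / E p"
  define c where "c = (1 + cbil (H p) (H p)) / 4"
  have Ep: "E p \<noteq> 0" using E_nz[OF p] .
  have h12: "hbil (d2psi \<Phi> ee1 p) (d2psi \<Phi> ee2 p) = (x1 * g2 + x2 * g1 - b1 * d2 - b2 * d1) / (2 * E p)
      + (1 + cbil (H p) (H p)) / 4 * g1 * g2"
    using hb_gen[OF sm_ee(1) n1 sm_ee(2) n2 p] unfolding cm .
  have h11: "hbil (d2psi \<Phi> ee1 p) (d2psi \<Phi> ee1 p) = iE * (x1 * g1 - b1 * d1) + c * g1 * g1"
  proof -
    have "hbil (d2psi \<Phi> ee1 p) (d2psi \<Phi> ee1 p) = (x1 * g1 + x1 * g1 - b1 * d1 - b1 * d1) / (2 * E p)
      + (1 + cbil (H p) (H p)) / 4 * g1 * g1"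
      using hb_gen[OF sm_ee(1) n1 sm_ee(1) n1 p] unfolding cm .
    also have "\<dots> = iE * (x1 * g1 - b1 * d1) + c * g1 * g1"
      unfolding iE_def c_def using Ep by (simp add: field_simps)
    finally show ?thesis .
  qed
  have h22: "hbil (d2psi \<Phi> ee2 p) (d2psi \<Phi> ee2 p) = iE * (x2 * g2 - b2 * d2) + c * g2 * g2"
  proof -
    have "hbil (d2psi \<Phi> ee2 p) (d2psi \<Phi> ee2 p) = (x2 * g2 + x2 * g2 - b2 * d2 - b2 * d2) / (2 * E p)
      + (1 + cbil (H p) (H p)) / 4 * g2 * g2"
      using hb_gen[OF sm_ee(2) n2 sm_ee(2) n2 p] unfolding cm .
    also have "\<dots> = iE * (x2 * g2 - b2 * d2) + c * g2 * g2"
      unfolding iE_def c_def using Ep by (simp add: field_simps)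
    finally show ?thesis .
  qed
  have sc: "1 / (E p)\<^sup>2 = iE^2" "1/4 * (1 + cbil (H p) (H p)) * (1 / E p) = c * iE"
     "1/64 * (1 + cbil (H p) (H p))\<^sup>2 = c^2/4"
    unfolding iE_def c_def by (simp_all add: power2_eq_square field_simps)
  show ?thesis
  proof
    show "MontielQ \<Phi> n1 n2 p =
       (1 / E p) * (cbil (nablaN \<Phi> (nablaNb \<Phi> h) p) (h p) - cbil (nablaN \<Phi> h p) (nablaNb \<Phi> h p))
       + 1/4 * (1 + cbil (H p) (H p)) * cbil (h p) (h p)"
      unfolding Qd h12 pXh pdb phh using Ep by (simp add: field_simps)
    show "MontielO \<Phi> n1 n2 p =
       (1 / (E p)\<^sup>2) *
         (1/4 * cbil (nablaN \<Phi> (nablaNb \<Phi> h) p) (nablaN \<Phi> (nablaNb \<Phi> h) p) * cbil (h p) (h p)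
        + 1/4 * cbil (nablaN \<Phi> h p) (nablaN \<Phi> h p) * cbil (nablaNb \<Phi> h p) (nablaNb \<Phi> h p)
        - 1/2 * cbil (nablaN \<Phi> (nablaNb \<Phi> h) p) (nablaN \<Phi> h p) * cbil (nablaNb \<Phi> h p) (h p)
        - 1/2 * cbil (nablaN \<Phi> (nablaNb \<Phi> h) p) (nablaNb \<Phi> h p) * cbil (nablaN \<Phi> h p) (h p)
        + 1/2 * cbil (nablaN \<Phi> (nablaNb \<Phi> h) p) (h p) * cbil (nablaN \<Phi> h p) (nablaNb \<Phi> h p))
     + 1/4 * (1 + cbil (H p) (H p)) * (1 / E p) *
         (1/2 * cbil (nablaN \<Phi> (nablaNb \<Phi> h) p) (h p) * cbil (h p) (h p)
        - cbil (nablaN \<Phi> h p) (h p) * cbil (nablaNb \<Phi> h p) (h p)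
        + 1/2 * cbil (nablaN \<Phi> h p) (nablaNb \<Phi> h p) * cbil (h p) (h p))
     + 1/64 * (1 + cbil (H p) (H p))\<^sup>2 * (cbil (h p) (h p) * cbil (h p) (h p))"
      unfolding Od h11 h22 sc pXX phh pdd pbb pXd pbh pXb pdh pXh pdb
      by (rule poly_id)
  qed
qed

end

theorem theoremI:
  fixes U :: "complex set" and \<Phi> n1 n2 :: "complex \<Rightarrow> real^5" and p :: complex
  assumes "conformal_immersion_S4 U \<Phi>"
    and "oriented_normal_frame U \<Phi> n1 n2"
    and "p \<in> U"
  defines "h \<equiv> h0 \<Phi>"
    and "E \<equiv> e2lam \<Phi> p"
    and "HH \<equiv> cbil (Hvec \<Phi> p) (Hvec \<Phi> p)"
  shows
    "(MontielQ \<Phi> n1 n2 p =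
       (1 / E) * (cbil (nablaN \<Phi> (nablaNb \<Phi> h) p) (h p)
                  - cbil (nablaN \<Phi> h p) (nablaNb \<Phi> h p))
       + 1/4 * (1 + HH) * cbil (h p) (h p))
     \<and>
     (MontielO \<Phi> n1 n2 p =
       (1 / E\<^sup>2) *
         (1/4 * cbil (nablaN \<Phi> (nablaNb \<Phi> h) p) (nablaN \<Phi> (nablaNb \<Phi> h) p) * cbil (h p) (h p)
        + 1/4 * cbil (nablaN \<Phi> h p) (nablaN \<Phi> h p) * cbil (nablaNb \<Phi> h p) (nablaNb \<Phi> h p)
        - 1/2 * cbil (nablaN \<Phi> (nablaNb \<Phi> h) p) (nablaN \<Phi> h p) * cbil (nablaNb \<Phi> h p) (h p)
        - 1/2 * cbil (nablaN \<Phi> (nablaNb \<Phi> h) p) (nablaNb \<Phi> h p) * cbil (nablaN \<Phi> h p) (h p)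
        + 1/2 * cbil (nablaN \<Phi> (nablaNb \<Phi> h) p) (h p) * cbil (nablaN \<Phi> h p) (nablaNb \<Phi> h p))
     + 1/4 * (1 + HH) * (1 / E) *
         (1/2 * cbil (nablaN \<Phi> (nablaNb \<Phi> h) p) (h p) * cbil (h p) (h p)
        - cbil (nablaN \<Phi> h p) (h p) * cbil (nablaNb \<Phi> h p) (h p)
        + 1/2 * cbil (nablaN \<Phi> h p) (nablaNb \<Phi> h p) * cbil (h p) (h p))
     + 1/64 * (1 + HH)\<^sup>2 * (cbil (h p) (h p) * cbil (h p) (h p)))"
  proof -
  have G: "geo U \<Phi> n1 n2" unfolding geo_def using assms(1,2) by blast
  show ?thesis unfolding h_def E_def HH_def by (rule geo.final[OF G assms(3)])
qed

end
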